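(* Fix $\mathcal K>0$. The closure of $\mathrm{Conv}(\mathcal M^{(\mathcal K)}_{\mathrm{PR}})$ in the topology of componentwise weak convergence equals $\mathcal M^{(\mathcal K)}_{\mathrm{NS}}$; in particular, for every $\boldsymbol\mu\in\mathcal M^{(\mathcal K)}_{\mathrm{NS}}$ there is a sequence in $\mathrm{Conv}(\mathcal M^{(\mathcal K)}_{\mathrm{PR}})$ converging weakly, componentwise, to $\boldsymbol\mu$.
   Context: A behaviour on $[-\mathcal K,\mathcal K]^2$ is a family $\boldsymbol\mu=(\mu_{x,y})_{x,y\in\{0,1\}}$ of Borel probability measures on $[-\mathcal K,\mathcal K]^2$; convex combinations are componentwise. It is no-signaling if $\mu_{x,0}(A\times[-\mathcal K,\mathcal K])=\mu_{x,1}(A\times[-\mathcal K,\mathcal K])$ for all $x$ and Borel $A\subseteq[-\mathcal K,\mathcal K]$, and $\mu_{0,y}([-\mathcal K,\mathcal K]\times B)=\mu_{1,y}([-\mathcal K,\mathcal K]\times B)$ for all $y$ and Borel $B$; $\mathcal M^{(\mathcal K)}_{\mathrm{NS}}$ is the set of these. $\delta_{a,b}$ is the Dirac measure at $(a,b)$. A CV PR box of order $k\in\mathbb N$ is a behaviour with $\mu_{x,y}=\frac1k\sum_{j=1}^k\delta_{a_{x,j},\,b_{y,[j+xy]_k}}$, where for each $x,y$ the vectors $\boldsymbol a_x,\boldsymbol b_y$ each have pairwise distinct components and $[\,\cdot\,]_k$ is reduction modulo $k$ into $\{1,\dots,k\}$; $\mathcal M^{(\mathcal K)}_{\mathrm{PR}}$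 is the set of CV PR boxes (all orders $k$) with all components of $\boldsymbol a_x,\boldsymbol b_y$ in $[-\mathcal K,\mathcal K]$. $\mathrm{Conv}$ denotes the set of finite convex combinations. Weak convergence $\mu_n\to\mu$ means $\int f\,d\mu_n\to\int f\,d\mu$ for all bounded continuous $f$ on $[-\mathcal K,\mathcal K]^2$. *)

theory Defs
  imports "HOL-Probability.Probability"
begin

definition sq :: "real \<Rightarrow> (real \<times> real) set" where
  "sq K = {-K..K} \<times> {-K..K}"

definition sqM :: "real \<Rightarrow> (real \<times> real) measure" where
  "sqM K = restrict_space borel (sq K)"

text \<open>A behaviour: inputs x,y in {0,1} encoded as bool (False = 0, True = 1);
  each component is a Borel probability measure on [-K,K]^2.\<close>
type_synonym behaviour = "bool \<Rightarrow> bool \<Rightarrow> (real \<times> real) measure"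

definition is_behaviour :: "real \<Rightarrow> behaviour \<Rightarrow> bool" where
  "is_behaviour K \<mu> \<longleftrightarrow>
     (\<forall>x y. prob_space (\<mu> x y) \<and> sets (\<mu> x y) = sets (sqM K))"

definition no_signaling :: "real \<Rightarrow> behaviour \<Rightarrow> bool" where
  "no_signaling K \<mu> \<longleftrightarrow> is_behaviour K \<mu> \<and>
     (\<forall>x A. A \<in> sets (borel :: real measure) \<and> A \<subseteq> {-K..K} \<longrightarrow>
        measure (\<mu> x False) (A \<times> {-K..K}) = measure (\<mu> x True) (A \<times> {-K..K})) \<and>
     (\<forall>y B. B \<in> sets (borel :: real measure) \<and> B \<subseteq> {-K..K} \<longrightarrow>
        measure (\<mu> False y) ({-K..K} \<times> B) = measure (\<mu> True y) ({-K..K} \<times> B))"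

definition redk :: "nat \<Rightarrow> nat \<Rightarrow> nat" where
  "redk k m = (m - 1) mod k + 1"

text \<open>CV PR box: mu_{x,y} = (1/k) sum_{j=1..k} delta_{(a_{x,j}, b_{y,[j+xy]_k})},
  expressed through the values of the measure on every measurable set.\<close>
definition is_PR_box :: "real \<Rightarrow> behaviour \<Rightarrow> bool" where
  "is_PR_box K \<mu> \<longleftrightarrow> is_behaviour K \<mu> \<and>
     (\<exists>(k::nat) (a :: bool \<Rightarrow> nat \<Rightarrow> real) (b :: bool \<Rightarrow> nat \<Rightarrow> real).
        k \<ge> 1 \<and>
        (\<forall>x. inj_on (a x) {1..k}) \<and> (\<forall>y. inj_on (b y) {1..k}) \<and>
        (\<forall>x j. j \<in> {1..k} \<longrightarrow> a x j \<in> {-K..K}) \<and>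
        (\<forall>y j. j \<in> {1..k} \<longrightarrow> b y j \<in> {-K..K}) \<and>
        (\<forall>x y. \<forall>A \<in> sets (\<mu> x y).
           emeasure (\<mu> x y) A =
             ennreal (real (card {j \<in> {1..k}.
                 (a x j, b y (redk k (j + of_bool (x \<and> y)))) \<in> A}) / real k)))"

definition in_conv_PR :: "real \<Rightarrow> behaviour \<Rightarrow> bool" where
  "in_conv_PR K \<mu> \<longleftrightarrow> is_behaviour K \<mu> \<and>
     (\<exists>(n::nat) (c :: nat \<Rightarrow> real) (\<nu> :: nat \<Rightarrow> behaviour).
        (\<forall>i<n. c i \<ge> 0 \<and> is_PR_box K (\<nu> i)) \<and> (\<Sum>i<n. c i) = 1 \<and>
        (\<forall>x y. \<forall>A \<in> sets (\<mu> x y).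
           emeasure (\<mu> x y) A = (\<Sum>i<n. ennreal (c i) * emeasure (\<nu> i x y) A)))"

definition cw_weak_conv :: "real \<Rightarrow> (nat \<Rightarrow> behaviour) \<Rightarrow> behaviour \<Rightarrow> bool" where
  "cw_weak_conv K \<mu>s \<mu> \<longleftrightarrow>
     (\<forall>x y. \<forall>f :: real \<times> real \<Rightarrow> real.
        continuous_on (sq K) f \<and> bounded (f ` sq K) \<longrightarrow>
        (\<lambda>n. \<integral>t. f t \<partial>(\<mu>s n x y)) \<longlonglongrightarrow> (\<integral>t. f t \<partial>(\<mu> x y)))"

end

theory Submission
  imports Defs
begin

definition ptm :: "real \<Rightarrow> 'i set \<Rightarrow> ('i \<Rightarrow> real) \<Rightarrow> ('i \<Rightarrow> real \<times> real) \<Rightarrow> (real \<times> real) measure" where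
  "ptm K P w g = distr (density (count_space P) (\<lambda>i. ennreal (w i))) (sqM K) g"

lemma space_sqM[simp]: "space (sqM K) = sq K"
  by (simp add: sqM_def space_restrict_space)

lemma sets_ptm[simp]: "sets (ptm K P w g) = sets (sqM K)"
  by (simp add: ptm_def)

lemma emeasure_ptm:
  assumes "finite P" "\<And>i. i \<in> P \<Longrightarrow> w i \<ge> 0" "g ` P \<subseteq> sq K" "A \<in> sets (sqM K)"
  shows "emeasure (ptm K P w g) A = ennreal (\<Sum>i\<in>{i\<in>P. g i \<in> A}. w i)"
proof -
  have gm: "g \<in> measurable (count_space P) (sqM K)"
    using assms(3) by (auto simp: measurable_count_space_eq1)
  have "emeasure (ptm K P w g) A = emeasure (density (count_space P) (\<lambda>i. ennreal (w i))) (g -` A \<inter> P)"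
    unfolding ptm_def using gm assms(4) by (simp add: emeasure_distr)
  also have "\<dots> = (\<integral>\<^sup>+ i. ennreal (w i) * indicator (g -` A \<inter> P) i \<partial>count_space P)"
    by (subst emeasure_density) auto
  also have "\<dots> = (\<Sum>i\<in>P. ennreal (w i) * indicator (g -` A \<inter> P) i)"
    using assms(1) by (simp add: nn_integral_count_space_finite)
  also have "\<dots> = (\<Sum>i\<in>{i\<in>P. g i \<in> A}. ennreal (w i))"
    using assms(1) by (auto simp: sum.inter_filter[symmetric] indicator_def intro!: sum.cong)
  also have "\<dots> = ennreal (\<Sum>i\<in>{i\<in>P. g i \<in> A}. w i)"
    using assms(2) by (subst sum_ennreal) auto
  finally show ?thesis .
qed

lemma prob_space_ptm:
  assumes "finite P" "\<And>i. i \<in> P \<Longrightarrow> w i \<ge> 0" "g ` P \<subseteq> sq K" "(\<Sum>i\<in>P. w i) = 1"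
  shows "prob_space (ptm K P w g)"
proof
  have "space (ptm K P w g) = sq K" by (simp add: ptm_def)
  moreover have "sq K \<in> sets (sqM K)" by (metis space_sqM sets.top)
  ultimately show "emeasure (ptm K P w g) (space (ptm K P w g)) = 1"
  proof -
    have "{i\<in>P. g i \<in> sq K} = P" using assms(3) by auto
    then show ?thesis using emeasure_ptm[OF assms(1-3) \<open>sq K \<in> sets (sqM K)\<close>] assms(4) \<open>space (ptm K P w g) = sq K\<close>
      by simp
  qed
qed

definition cellix :: "real \<Rightarrow> nat \<Rightarrow> real \<Rightarrow> nat" where
  "cellix K m t = min (m - 1) (nat \<lfloor>(t + K) / (2*K/m)\<rfloor>)"

definition cellp :: "real \<Rightarrow> nat \<Rightarrow> nat \<Rightarrow> nat \<Rightarrow> (real \<times> real) set" where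
  "cellp K m i j = {s \<in> sq K. cellix K m (fst s) = i \<and> cellix K m (snd s) = j}"

definition pt :: "real \<Rightarrow> nat \<Rightarrow> nat \<Rightarrow> nat \<Rightarrow> nat \<Rightarrow> real" where
  "pt K m i t k = -K + (2*K/m) * (real i + real t / (real k + 1))"

lemma cellix_lt: "m \<ge> 1 \<Longrightarrow> cellix K m t < m"
  by (simp add: cellix_def)

lemma cellix_pt:
  assumes "K > 0" "m \<ge> 1" "i < m" "t \<le> k"
  shows "cellix K m (pt K m i t k) = i"
proof -
  have "pt K m i t k + K = (2*K/m) * (real i + real t / (real k + 1))"
    by (simp add: pt_def)
  moreover have "2*K/m \<noteq> 0" using assms by auto
  ultimately have "(pt K m i t k + K) / (2*K/m) = real i + real t / (real k + 1)"
    by simp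
  moreover have "0 \<le> real t / (real k + 1)" "real t / (real k + 1) < 1"
    using assms by (auto simp: field_simps)
  ultimately have "\<lfloor>(pt K m i t k + K) / (2*K/m)\<rfloor> = int i"
    by (simp add: floor_eq_iff)
  then show ?thesis using assms by (simp add: cellix_def)
qed

lemma pt_in:
  assumes "K > 0" "m \<ge> 1" "i < m" "t \<le> k"
  shows "pt K m i t k \<in> {-K..K}"
proof -
  have f: "0 \<le> real t / (real k + 1)" "real t / (real k + 1) < 1"
    using assms by (auto simp: field_simps)
  have "real i + real t / (real k + 1) \<le> real m"
    using f assms(3) by (smt (verit) of_nat_less_iff nat_less_real_le of_nat_1 of_nat_add)
  then have "(2*K/m) * (real i + real t / (real k + 1)) \<le> (2*K/m) * m"
    using assms by (intro mult_left_mono) auto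
  moreover have "(2*K/m) * (real i + real t / (real k + 1)) \<ge> 0"
    using assms f by auto
  ultimately show ?thesis using assms by (auto simp: pt_def)
qed

lemma pt_inj:
  assumes "K > 0" "m \<ge> 1" "i < m" "t \<le> k" "t' \<le> k" "pt K m i t k = pt K m i t' k"
  shows "t = t'"
proof -
  have "real m > 0" using assms by auto
  then have "real m + real k * real m \<noteq> 0" by (smt (verit) mult_nonneg_nonneg of_nat_0_le_iff)
  then show ?thesis using assms by (simp add: pt_def field_simps)
qed

lemma cell_bound:
  assumes "K > 0" "m \<ge> 1" "t \<in> {-K..K}"
  shows "-K + (2*K/m) * cellix K m t \<le> t" "t \<le> -K + (2*K/m) * (cellix K m t + 1)"
proof -
  define u where "u = (t + K) / (2*K/m)"
  have u0: "u \<ge> 0" using assms by (simp add: u_def)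
  have um: "u \<le> m" using assms by (simp add: u_def field_simps)
  have tu: "t = -K + (2*K/m) * u" using assms by (simp add: u_def field_simps)
  have "real (cellix K m t) \<le> u"
  proof -
    have "real (cellix K m t) \<le> real (nat \<lfloor>u\<rfloor>)" unfolding cellix_def u_def[symmetric] by simp
    also have "\<dots> \<le> u" using u0 by linarith
    finally show ?thesis .
  qed
  then have "(2*K/m) * cellix K m t \<le> (2*K/m) * u"
    using assms by (intro mult_left_mono) auto
  then show "-K + (2*K/m) * cellix K m t \<le> t"
    using tu by linarith
  have "u \<le> real (cellix K m t) + 1"
  proof (cases "nat \<lfloor>u\<rfloor> \<le> m - 1")
    case True
    then have "cellix K m t = nat \<lfloor>u\<rfloor>" by (simp add: cellix_def u_def)
    then show ?thesis using u0 by linarith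
  next
    case False
    then have "cellix K m t = m - 1" by (simp add: cellix_def u_def)
    then show ?thesis using um assms(2) by (simp add: of_nat_diff)
  qed
  then have "(2*K/m) * u \<le> (2*K/m) * (cellix K m t + 1)"
    using assms by (intro mult_left_mono) auto
  then show "t \<le> -K + (2*K/m) * (cellix K m t + 1)"
    using tu by linarith
qed

lemma meas_cellix[measurable]: "cellix K m \<in> measurable borel (count_space UNIV)"
  unfolding cellix_def by measurable

lemma sq_sets[measurable]: "sq K \<in> sets borel"
  unfolding sq_def by (simp add: borel_closed closed_Times)

lemma cellp_sets: "cellp K m i j \<in> sets (sqM K)"
proof -
  have f: "fst \<in> borel_measurable (borel::(real\<times>real) measure)"
    by (subst borel_prod[symmetric]) simp
  have g: "snd \<in> borel_measurable (borel::(real\<times>real) measure)"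
    by (subst borel_prod[symmetric]) simp
  have "{s. cellix K m (fst s) = i \<and> cellix K m (snd s) = j} \<in> sets (borel :: (real\<times>real) measure)"
    using measurable_compose[OF f meas_cellix] measurable_compose[OF g meas_cellix] by measurable
  then show ?thesis unfolding cellp_def sqM_def
  proof (subst sets_restrict_space_iff)
    show "sq K \<inter> space borel \<in> sets borel" by simp
    have "{s \<in> sq K. cellix K m (fst s) = i \<and> cellix K m (snd s) = j} = sq K \<inter> {s. cellix K m (fst s) = i \<and> cellix K m (snd s) = j}" by auto
    then show "{s \<in> sq K. cellix K m (fst s) = i \<and> cellix K m (snd s) = j} \<subseteq> sq K \<and>
      {s \<in> sq K. cellix K m (fst s) = i \<and> cellix K m (snd s) = j} \<in> sets borel"
      using \<open>{s. cellix K m (fst s) = i \<and> cellix K m (snd s) = j} \<in> sets borel\<close> by auto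
  qed
qed

definition boxq :: "nat \<Rightarrow> (bool \<Rightarrow> nat \<Rightarrow> nat) \<Rightarrow> (bool \<Rightarrow> nat \<Rightarrow> nat) \<Rightarrow> bool \<Rightarrow> bool \<Rightarrow> nat \<Rightarrow> nat \<Rightarrow> real" where
  "boxq k \<alpha> \<beta> x y i j = (\<Sum>t\<in>{1..k}. if \<alpha> x t = i \<and> \<beta> y (redk k (t + of_bool (x \<and> y))) = j then 1 else 0) / real k"

definition dns :: "nat \<Rightarrow> (bool \<Rightarrow> bool \<Rightarrow> nat \<Rightarrow> nat \<Rightarrow> real) \<Rightarrow> bool" where
  "dns m p \<longleftrightarrow> (\<forall>x y i j. p x y i j \<ge> 0) \<and>
     (\<forall>x i. (\<Sum>j<m. p x False i j) = (\<Sum>j<m. p x True i j)) \<and>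
     (\<forall>y j. (\<Sum>i<m. p False y i j) = (\<Sum>i<m. p True y i j))"

lemma redk_in: "k \<ge> 1 \<Longrightarrow> redk k n \<in> {1..k}"
  by (simp add: redk_def Suc_leI)

lemma redk_id: "t \<in> {1..k} \<Longrightarrow> redk k t = t"
  by (auto simp: redk_def)

lemma redk_succ: "t \<in> {1..k} \<Longrightarrow> redk k (t + 1) = (if t = k then 1 else t + 1)"
  by (auto simp: redk_def)

lemma sum_redk:
  assumes "k \<ge> 1"
  shows "(\<Sum>t\<in>{1..k}. h (redk k (t + 1))) = (\<Sum>t\<in>{1..k}. (h t :: real))"
proof (rule sum.reindex_bij_witness[where i = "\<lambda>s. if s = 1 then k else s - 1" and j = "\<lambda>t. redk k (t + 1)"])
  fix t assume t: "t \<in> {1..k}"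
  show "(if redk k (t + 1) = 1 then k else redk k (t + 1) - 1) = t"
    using redk_succ[OF t] t by auto
  show "redk k (t + 1) \<in> {1..k}" using redk_in assms by auto
  show "h (redk k (t + 1)) = h (redk k (t + 1))" by simp
next
  fix s assume s: "s \<in> {1..k}"
  show "(if s = 1 then k else s - 1) \<in> {1..k}" using s assms by auto
  show "redk k ((if s = 1 then k else s - 1) + 1) = s"
    using s assms by (auto simp: redk_def)
qed

lemma sum_indicator_partition:
  assumes "\<And>t. t \<in> T \<Longrightarrow> g t < (m::nat)" "finite T"
  shows "(\<Sum>j<m. (\<Sum>t\<in>T. if P t \<and> g t = j then 1 else 0) :: real) = (\<Sum>t\<in>T. if P t then 1 else 0)"
proof -
  have "(\<Sum>j<m. (\<Sum>t\<in>T. if P t \<and> g t = j then 1 else 0) :: real) = (\<Sum>t\<in>T. \<Sum>j<m. if P t \<and> g t = j then 1 else 0)"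
    by (rule sum.swap)
  also have "\<dots> = (\<Sum>t\<in>T. if P t then 1 else 0)"
  proof (rule sum.cong)
    fix t assume "t \<in> T"
    then have "g t < m" using assms by auto
    have "(\<Sum>j<m. if P t \<and> g t = j then 1 else 0) = (\<Sum>j\<in>{..<m}. if j = g t then (if P t then 1 else 0) else (0::real))"
      by (intro sum.cong) auto
    also have "\<dots> = (if P t then 1 else 0)" using \<open>g t < m\<close> by (subst sum.delta) auto
    finally show "(\<Sum>j<m. if P t \<and> g t = j then 1 else 0) = (if P t then (1::real) else 0)" .
  qed simp
  finally show ?thesis .
qed

lemma boxq_nonneg: "boxq k \<alpha> \<beta> x y i j \<ge> 0"
  unfolding boxq_def by (intro divide_nonneg_nonneg sum_nonneg) auto

lemma boxq_rows:
  assumes "\<And>y t. t \<in> {1..k} \<Longrightarrow> \<beta> y t < m" "k \<ge> 1"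
  shows "(\<Sum>j<m. boxq k \<alpha> \<beta> x y i j) = (\<Sum>t\<in>{1..k}. if \<alpha> x t = i then 1 else 0) / real k"
  unfolding boxq_def sum_divide_distrib[symmetric]
  by (rule arg_cong[where f = "\<lambda>z. z / real k"], rule sum_indicator_partition)
     (use assms redk_in in auto)

lemma boxq_cols:
  assumes "\<And>x t. t \<in> {1..k} \<Longrightarrow> \<alpha> x t < m" "k \<ge> 1"
  shows "(\<Sum>i<m. boxq k \<alpha> \<beta> x y i j) = (\<Sum>t\<in>{1..k}. if \<beta> y t = j then 1 else 0) / real k"
proof -
  have "(\<Sum>i<m. boxq k \<alpha> \<beta> x y i j) = (\<Sum>t\<in>{1..k}. if \<beta> y (redk k (t + of_bool (x \<and> y))) = j then 1 else 0) / real k"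
    unfolding boxq_def sum_divide_distrib[symmetric]
    by (rule arg_cong[where f = "\<lambda>z. z / real k"], subst sum_indicator_partition[symmetric, where g = "\<alpha> x" and m = m])
       (use assms in \<open>auto intro!: sum.cong simp: conj_commute\<close>)
  also have "\<dots> = (\<Sum>t\<in>{1..k}. if \<beta> y t = j then 1 else 0) / real k"
  proof (cases "x \<and> y")
    case True
    then show ?thesis using sum_redk[OF assms(2), of "\<lambda>s. if \<beta> y s = j then 1 else 0"] by simp
  next
    case False
    then show ?thesis by (auto intro!: sum.cong simp: redk_id)
  qed
  finally show ?thesis .
qed

lemma boxq_dns:
  assumes "\<And>x t. t \<in> {1..k} \<Longrightarrow> \<alpha> x t < m" "\<And>y t. t \<in> {1..k} \<Longrightarrow> \<beta> y t < m" "k \<ge> 1"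
  shows "dns m (boxq k \<alpha> \<beta>)"
  unfolding dns_def using boxq_rows[OF assms(2,3)] boxq_cols[OF assms(1,3)] boxq_nonneg by simp

lemma boxq_pos_ex:
  assumes "boxq k \<alpha> \<beta> x y i j > 0"
  shows "\<exists>t\<in>{1..k}. \<alpha> x t = i \<and> \<beta> y (redk k (t + of_bool (x \<and> y))) = j"
proof (rule ccontr)
  assume "\<not> ?thesis"
  then have "boxq k \<alpha> \<beta> x y i j = 0" unfolding boxq_def by (auto intro: sum.neutral)
  then show False using assms by simp
qed

lemma boxq_pos:
  assumes "t \<in> {1..k}" "\<alpha> x t = i" "\<beta> y (redk k (t + of_bool (x \<and> y))) = j"
  shows "boxq k \<alpha> \<beta> x y i j > 0"
proof -
  have "(1::real) \<le> (\<Sum>t\<in>{1..k}. if \<alpha> x t = i \<and> \<beta> y (redk k (t + of_bool (x \<and> y))) = j then 1 else 0)"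
    using member_le_sum[of t "{1..k}" "\<lambda>t. if \<alpha> x t = i \<and> \<beta> y (redk k (t + of_bool (x \<and> y))) = j then (1::real) else 0"] assms
    by auto
  moreover have "k \<ge> 1" using assms by auto
  ultimately show ?thesis unfolding boxq_def by auto
qed

lemma pos_sum_ex:
  fixes f :: "nat \<Rightarrow> real"
  assumes "(\<Sum>i<m. f i) > 0"
  shows "\<exists>i<m. f i > 0"
proof (rule ccontr)
  assume "\<not> ?thesis"
  then have "(\<Sum>i<m. f i) \<le> 0" by (intro sum_nonpos) auto
  then show False using assms by simp
qed

lemma pos_sum:
  fixes f :: "nat \<Rightarrow> real"
  assumes "\<And>i. f i \<ge> 0" "i < m" "f i > 0"
  shows "(\<Sum>i<m. f i) > 0"
  using member_le_sum[of i "{..<m}" f] assms by fastforce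

lemma dns_row_pos:
  assumes "dns m p" "p x y i j > 0" "j < m"
  shows "(\<Sum>j<m. p x y' i j) > 0"
proof -
  have "(\<Sum>j<m. p x y i j) > 0" using assms pos_sum[of "p x y i" j m] by (auto simp: dns_def)
  then show ?thesis using assms(1) unfolding dns_def by (cases y; cases y') auto
qed

lemma dns_col_pos:
  assumes "dns m p" "p x y i j > 0" "i < m"
  shows "(\<Sum>i<m. p x' y i j) > 0"
proof -
  have "(\<Sum>i<m. p x y i j) > 0" using assms pos_sum[of "\<lambda>i. p x y i j" i m] by (auto simp: dns_def)
  then show ?thesis using assms(1) unfolding dns_def by (cases x; cases x') auto
qed

lemma someI_pos:
  assumes "(\<Sum>i<(m::nat). f i) > (0::real)"
  shows "(SOME i. i < m \<and> f i > 0) < m \<and> f (SOME i. i < m \<and> f i > 0) > 0"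
  using pos_sum_ex[OF assms] by (rule someI_ex)

lemma exists_box:
  assumes p: "dns m p" and ne: "p x0 y0 i0 j0 > 0" "i0 < m" "j0 < m"
  shows "\<exists>k \<alpha> \<beta>. k \<ge> 1 \<and> (\<forall>x t. t \<in> {1..k} \<longrightarrow> \<alpha> x t < m) \<and> (\<forall>y t. t \<in> {1..k} \<longrightarrow> \<beta> y t < m) \<and>
     (\<forall>x y t. t \<in> {1..k} \<longrightarrow> p x y (\<alpha> x t) (\<beta> y (redk k (t + of_bool (x \<and> y)))) > 0)"
proof -
  define S where "S = {b. b < m \<and> (\<Sum>i<m. p True True i b) > 0}"
  define A where "A b = (SOME i. i < m \<and> p False True i b > 0)" for b
  define B where "B i = (SOME j. j < m \<and> p False False i j > 0)" for i
  define C where "C j = (SOME i. i < m \<and> p True False i j > 0)" for j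
  define E where "E i = (SOME j. j < m \<and> p True True i j > 0)" for i
  define nxt where "nxt b = E (C (B (A b)))" for b
  have step: "A b < m \<and> p False True (A b) b > 0 \<and> B (A b) < m \<and> p False False (A b) (B (A b)) > 0 \<and>
     C (B (A b)) < m \<and> p True False (C (B (A b))) (B (A b)) > 0 \<and>
     nxt b < m \<and> p True True (C (B (A b))) (nxt b) > 0 \<and> nxt b \<in> S" if b: "b \<in> S" for b
  proof -
    have 1: "A b < m \<and> p False True (A b) b > 0"
      unfolding A_def by (rule someI_pos) (use b p dns_col_pos in \<open>auto simp: S_def dns_def\<close>)
    have 2: "B (A b) < m \<and> p False False (A b) (B (A b)) > 0"
      unfolding B_def by (rule someI_pos, rule dns_row_pos[OF p]) (use 1 b in \<open>auto simp: S_def\<close>)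
    have 3: "C (B (A b)) < m \<and> p True False (C (B (A b))) (B (A b)) > 0"
      unfolding C_def by (rule someI_pos, rule dns_col_pos[OF p]) (use 1 2 in auto)
    have 4: "nxt b < m \<and> p True True (C (B (A b))) (nxt b) > 0"
      unfolding nxt_def E_def by (rule someI_pos, rule dns_row_pos[OF p]) (use 2 3 in auto)
    have 5: "nxt b \<in> S"
      unfolding S_def using 4 dns_col_pos[OF p, of True True "C (B (A b))" "nxt b" True] 3 by auto
    show ?thesis using 1 2 3 4 5 by blast
  qed
  have "(\<Sum>j<m. p x0 True i0 j) > 0" by (rule dns_row_pos[OF p ne(1) ne(3)])
  then obtain j1 where j1: "j1 < m" "p x0 True i0 j1 > 0" using pos_sum_ex by blast
  have b0: "j1 \<in> S" unfolding S_def using dns_col_pos[OF p j1(2) ne(2), of True] j1 by auto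
  have iterS: "(nxt ^^ n) b \<in> S" if "b \<in> S" for n b
    using that by (induction n) (auto simp: step)
  have "\<not> inj_on (\<lambda>n. (nxt ^^ n) j1) {0..m}"
  proof
    assume inj: "inj_on (\<lambda>n. (nxt ^^ n) j1) {0..m}"
    have "(\<lambda>n. (nxt ^^ n) j1) ` {0..m} \<subseteq> {..<m}" using iterS[OF b0] by (auto simp: S_def)
    from card_inj_on_le[OF inj this] show False by simp
  qed
  then obtain a c where ac: "a \<in> {0..m}" "c \<in> {0..m}" "a \<noteq> c" "(nxt ^^ a) j1 = (nxt ^^ c) j1"
    unfolding inj_on_def by blast
  obtain a' c' where ac': "a' < c'" "(nxt ^^ a') j1 = (nxt ^^ c') j1"
    using ac by (metis nat_neq_iff)
  define bs where "bs = (nxt ^^ a') j1"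
  define k where "k = c' - a'"
  have k1: "k \<ge> 1" using ac' by (simp add: k_def)
  have bsS: "bs \<in> S" unfolding bs_def by (rule iterS[OF b0])
  have cyc: "(nxt ^^ k) bs = bs"
    using ac' unfolding bs_def k_def by (metis funpow_add le_add_diff_inverse2 less_imp_le o_apply)
  define b1 where "b1 t = (nxt ^^ (t - 1)) bs" for t
  define a0 where "a0 t = A (b1 t)" for t
  define b0' where "b0' t = B (a0 t)" for t
  define a1 where "a1 t = C (b0' t)" for t
  define \<alpha> where "\<alpha> x = (if x then a1 else a0)" for x
  define \<beta> where "\<beta> y = (if y then b1 else b0')" for y
  have b1S: "b1 t \<in> S" for t unfolding b1_def by (rule iterS[OF bsS])
  have b1next: "b1 (redk k (t + 1)) = nxt (b1 t)" if t: "t \<in> {1..k}" for t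
  proof (cases "t = k")
    case True
    then have "b1 (redk k (t + 1)) = bs" using redk_succ[OF t] by (simp add: b1_def)
    also have "\<dots> = (nxt ^^ k) bs" using cyc by simp
    also have "\<dots> = nxt (b1 t)" using True k1 unfolding b1_def
      by (metis Suc_diff_le diff_Suc_1 funpow.simps(2) o_apply)
    finally show ?thesis .
  next
    case False
    then have "b1 (redk k (t + 1)) = (nxt ^^ t) bs" using redk_succ[OF t] by (simp add: b1_def)
    also have "\<dots> = nxt (b1 t)" using t unfolding b1_def
      by (metis Suc_diff_1 atLeastAtMost_iff funpow.simps(2) le_numeral_extra(2) o_apply less_le_trans zero_less_one)
    finally show ?thesis .
  qed
  show ?thesis
  proof (intro exI conjI allI impI)
    show "k \<ge> 1" by (rule k1)
    fix x t assume "t \<in> {1..k}"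
    show "\<alpha> x t < m" using step[OF b1S[of t]] by (auto simp: \<alpha>_def a1_def a0_def b0'_def)
  next
    fix y t assume "t \<in> {1..k}"
    show "\<beta> y t < m" using step[OF b1S[of t]] b1S[of t] by (auto simp: \<beta>_def a0_def b0'_def S_def)
  next
    fix x y t assume t: "t \<in> {1..k}"
    show "p x y (\<alpha> x t) (\<beta> y (redk k (t + of_bool (x \<and> y)))) > 0"
    proof (cases x; cases y)
      assume "x" "y"
      then show ?thesis using step[OF b1S[of t]] b1next[OF t]
        by (simp add: \<alpha>_def \<beta>_def a1_def a0_def b0'_def)
    next
      assume "x" "\<not> y"
      then show ?thesis using step[OF b1S[of t]] redk_id[OF t]
        by (simp add: \<alpha>_def \<beta>_def a1_def a0_def b0'_def)
    next
      assume "\<not> x" "y"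
      then show ?thesis using step[OF b1S[of t]] redk_id[OF t]
        by (simp add: \<alpha>_def \<beta>_def a1_def a0_def b0'_def)
    next
      assume "\<not> x" "\<not> y"
      then show ?thesis using step[OF b1S[of t]] redk_id[OF t]
        by (simp add: \<alpha>_def \<beta>_def a1_def a0_def b0'_def)
    qed
  qed
qed

definition suppd :: "nat \<Rightarrow> (bool \<Rightarrow> bool \<Rightarrow> nat \<Rightarrow> nat \<Rightarrow> real) \<Rightarrow> (bool \<times> bool \<times> nat \<times> nat) set" where
  "suppd m p = {(x,y,i,j). i < m \<and> j < m \<and> p x y i j > 0}"

lemma finite_suppd: "finite (suppd m p)"
proof -
  have "suppd m p \<subseteq> UNIV \<times> UNIV \<times> {..<m} \<times> {..<m}" by (auto simp: suppd_def)
  then show ?thesis by (rule finite_subset) auto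
qed

definition decomposable where
  "decomposable m p \<longleftrightarrow> (\<exists>(n::nat) c kk \<alpha> \<beta>. (\<forall>l<n. c l \<ge> (0::real) \<and> kk l \<ge> 1 \<and>
     (\<forall>x t. t \<in> {1..kk l} \<longrightarrow> \<alpha> l x t < m) \<and> (\<forall>y t. t \<in> {1..kk l} \<longrightarrow> \<beta> l y t < m)) \<and>
     (\<forall>x y i j. i < m \<longrightarrow> j < m \<longrightarrow> p x y i j = (\<Sum>l<n. c l * boxq (kk l) (\<alpha> l) (\<beta> l) x y i j)))"

lemma boxq_outside:
  assumes "\<And>x t. t \<in> {1..k} \<Longrightarrow> \<alpha> x t < m" "\<And>y t. t \<in> {1..k} \<Longrightarrow> \<beta> y t < m" "k \<ge> 1"
    "boxq k \<alpha> \<beta> x y i j > 0"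
  shows "i < m \<and> j < m"
  using boxq_pos_ex[OF assms(4)] assms(1,2) redk_in[OF assms(3)] by blast

lemma decomp: "dns m p \<Longrightarrow> decomposable m p"
proof (induction "card (suppd m p)" arbitrary: p rule: less_induct)
  case less
  note p = less.prems
  show ?case
  proof (cases "suppd m p = {}")
    case True
    then have "p x y i j = 0" if "i < m" "j < m" for x y i j
    proof -
      have "\<not> p x y i j > 0" using True that unfolding suppd_def by blast
      moreover have "p x y i j \<ge> 0" using p unfolding dns_def by blast
      ultimately show ?thesis by linarith
    qed
    then show ?thesis unfolding decomposable_def
      by (intro exI[of _ 0]) auto
  next
    case False
    then obtain x0 y0 i0 j0 where z: "p x0 y0 i0 j0 > 0" "i0 < m" "j0 < m"
      by (auto simp: suppd_def)
    obtain k \<alpha> \<beta> where box: "k \<ge> 1" "\<And>x t. t \<in> {1..k} \<Longrightarrow> \<alpha> x t < m" "\<And>y t. t \<in> {1..k} \<Longrightarrow> \<beta> y t < m"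
      "\<And>x y t. t \<in> {1..k} \<Longrightarrow> p x y (\<alpha> x t) (\<beta> y (redk k (t + of_bool (x \<and> y)))) > 0"
      using exists_box[OF p z] by blast
    define q where "q = boxq k \<alpha> \<beta>"
    have qdns: "dns m q" unfolding q_def by (rule boxq_dns) (use box in auto)
    have qin: "i < m \<and> j < m" if "q x y i j > 0" for x y i j
      using that unfolding q_def by (intro boxq_outside[of k \<alpha> m \<beta>]) (use box in auto)
    have qp: "p x y i j > 0" if "q x y i j > 0" for x y i j
      using boxq_pos_ex[of k \<alpha> \<beta> x y i j] that box(4) unfolding q_def by blast
    define Z where "Z = {z \<in> UNIV \<times> UNIV \<times> {..<m} \<times> {..<m}. q (fst z) (fst (snd z)) (fst (snd (snd z))) (snd (snd (snd z))) > 0}"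
    define L where "L = (\<lambda>z. p (fst z) (fst (snd z)) (fst (snd (snd z))) (snd (snd (snd z))) /
          q (fst z) (fst (snd z)) (fst (snd (snd z))) (snd (snd (snd z)))) ` Z"
    have finZ: "finite Z" unfolding Z_def by (rule finite_subset[of _ "UNIV \<times> UNIV \<times> {..<m} \<times> {..<m}"]) auto
    have q1: "q False False (\<alpha> False 1) (\<beta> False 1) > 0"
      unfolding q_def by (rule boxq_pos[of 1]) (use box(1) redk_id[of 1 k] in auto)
    have "(False, False, \<alpha> False 1, \<beta> False 1) \<in> Z"
      using q1 qin[OF q1] by (auto simp: Z_def)
    then have Lne: "L \<noteq> {}" by (auto simp: L_def)
    have finL: "finite L" using finZ by (simp add: L_def)
    define lam where "lam = Min L"
    have lamL: "lam \<in> L" unfolding lam_def using Min_in[OF finL Lne] .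
    have lam_le: "lam \<le> p x y i j / q x y i j" if "q x y i j > 0" for x y i j
    proof -
      have "(x,y,i,j) \<in> Z" using that qin[OF that] by (auto simp: Z_def)
      then have "p x y i j / q x y i j \<in> L" unfolding L_def by force
      then show ?thesis unfolding lam_def using finL by simp
    qed
    obtain x1 y1 i1 j1 where z1: "q x1 y1 i1 j1 > 0" "i1 < m" "j1 < m" "lam = p x1 y1 i1 j1 / q x1 y1 i1 j1"
      using lamL unfolding L_def Z_def by auto
    have lampos: "lam > 0" using z1 qp[OF z1(1)] by simp
    define p' where "p' x y i j = p x y i j - lam * q x y i j" for x y i j
    have p'nn: "p' x y i j \<ge> 0" for x y i j
    proof (cases "q x y i j > 0")
      case True
      then have "lam * q x y i j \<le> p x y i j" using lam_le[OF True] by (simp add: field_simps)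
      then show ?thesis by (simp add: p'_def)
    next
      case False
      moreover have "q x y i j \<ge> 0" using qdns unfolding dns_def by blast
      ultimately have "q x y i j = 0" by linarith
      then show ?thesis using p by (simp add: p'_def dns_def)
    qed
    have p'dns: "dns m p'"
      unfolding dns_def
    proof (intro conjI allI)
      show "0 \<le> p' x y i j" for x y i j by (rule p'nn)
      fix x i
      show "(\<Sum>j<m. p' x False i j) = (\<Sum>j<m. p' x True i j)"
        using p qdns unfolding p'_def dns_def by (simp add: sum_subtractf sum_distrib_left[symmetric])
    next
      fix y j
      show "(\<Sum>i<m. p' False y i j) = (\<Sum>i<m. p' True y i j)"
        using p qdns unfolding p'_def dns_def by (simp add: sum_subtractf sum_distrib_left[symmetric])
    qed
    have sub: "suppd m p' \<subset> suppd m p"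
    proof
      show "suppd m p' \<subseteq> suppd m p"
      proof
        fix z assume "z \<in> suppd m p'"
        moreover have "p' x y i j \<le> p x y i j" for x y i j
          using lampos qdns by (simp add: p'_def dns_def)
        ultimately show "z \<in> suppd m p" unfolding suppd_def
          by (cases z) (auto intro: less_le_trans)
      qed
      have "(x1,y1,i1,j1) \<in> suppd m p" using qp[OF z1(1)] z1 by (simp add: suppd_def)
      moreover have "(x1,y1,i1,j1) \<notin> suppd m p'" using z1 by (simp add: suppd_def p'_def)
      ultimately show "suppd m p' \<noteq> suppd m p" by blast
    qed
    have "card (suppd m p') < card (suppd m p)"
      by (rule psubset_card_mono[OF finite_suppd sub])
    from less.hyps[OF this p'dns] obtain n :: nat and c kk \<alpha>s \<beta>s where
      IH: "\<forall>l<n. c l \<ge> (0::real) \<and> kk l \<ge> 1 \<and>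
         (\<forall>x t. t \<in> {1..kk l} \<longrightarrow> \<alpha>s l x t < m) \<and> (\<forall>y t. t \<in> {1..kk l} \<longrightarrow> \<beta>s l y t < m)"
        "\<forall>x y i j. i < m \<longrightarrow> j < m \<longrightarrow> p' x y i j = (\<Sum>l<n. c l * boxq (kk l) (\<alpha>s l) (\<beta>s l) x y i j)"
      unfolding decomposable_def by blast
    show ?thesis unfolding decomposable_def
    proof (intro exI conjI allI impI)
      fix l assume l: "l < Suc n"
      show "(c(n := lam)) l \<ge> 0" using IH(1) l lampos by (cases "l = n") auto
      show "(kk(n := k)) l \<ge> 1" using IH(1) l box(1) by (cases "l = n") auto
      show "(\<alpha>s(n := \<alpha>)) l x t < m" if "t \<in> {1..(kk(n := k)) l}" for x t
        using IH(1) l box(2) that by (cases "l = n") auto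
      show "(\<beta>s(n := \<beta>)) l y t < m" if "t \<in> {1..(kk(n := k)) l}" for y t
        using IH(1) l box(3) that by (cases "l = n") auto
    next
      fix x y i j assume ij: "i < m" "j < m"
      have aux: "(\<Sum>l<n. (c(n := lam)) l * boxq ((kk(n := k)) l) ((\<alpha>s(n := \<alpha>)) l) ((\<beta>s(n := \<beta>)) l) x y i j)
          = (\<Sum>l<n. c l * boxq (kk l) (\<alpha>s l) (\<beta>s l) x y i j)"
        by (rule sum.cong) auto
      have "(\<Sum>l<Suc n. (c(n := lam)) l * boxq ((kk(n := k)) l) ((\<alpha>s(n := \<alpha>)) l) ((\<beta>s(n := \<beta>)) l) x y i j)
          = (\<Sum>l<n. c l * boxq (kk l) (\<alpha>s l) (\<beta>s l) x y i j) + lam * q x y i j"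
        unfolding sum.lessThan_Suc aux by (simp add: q_def)
      also have "\<dots> = p x y i j" using spec[OF spec[OF spec[OF spec[OF IH(2), of x], of y], of i], of j] ij by (simp add: p'_def)
      finally show "p x y i j = (\<Sum>l<Suc n. (c(n := lam)) l * boxq ((kk(n := k)) l) ((\<alpha>s(n := \<alpha>)) l) ((\<beta>s(n := \<beta>)) l) x y i j)"
        by simp
    qed
  qed
qed

lemma card_filter_sum:
  assumes "finite S"
  shows "real (card {j\<in>S. P j}) = (\<Sum>j\<in>S. if P j then 1 else 0)"
  using assms by (simp add: sum.If_cases Int_def)

lemma rect_sets:
  assumes "A \<in> sets borel" "B \<in> sets borel" "A \<subseteq> {-K..K}" "B \<subseteq> {-K..K}"
  shows "A \<times> B \<in> sets (sqM K)"
proof -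
  have "A \<times> B \<in> sets (borel \<Otimes>\<^sub>M borel)" using assms by auto
  then have "A \<times> B \<in> sets (borel :: (real \<times> real) measure)" by (metis borel_prod)
  moreover have "sq K \<in> sets borel" unfolding sq_def by (simp add: borel_closed closed_Times)
  ultimately show ?thesis using assms unfolding sqM_def sq_def
    by (subst sets_restrict_space_iff) auto
qed

definition prm :: "real \<Rightarrow> nat \<Rightarrow> (bool \<Rightarrow> nat \<Rightarrow> real) \<Rightarrow> (bool \<Rightarrow> nat \<Rightarrow> real) \<Rightarrow> behaviour" where
  "prm K k a b x y = ptm K {1..k} (\<lambda>_. 1 / real k) (\<lambda>j. (a x j, b y (redk k (j + of_bool (x \<and> y)))))"

lemma prm_PR:
  assumes "k \<ge> 1" "\<And>x. inj_on (a x) {1..k}" "\<And>y. inj_on (b y) {1..k}"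
    "\<And>x j. j \<in> {1..k} \<Longrightarrow> a x j \<in> {-K..K}" "\<And>y j. j \<in> {1..k} \<Longrightarrow> b y j \<in> {-K..K}"
  shows "is_PR_box K (prm K k a b)"
proof -
  have img: "(\<lambda>j. (a x j, b y (redk k (j + of_bool (x \<and> y))))) ` {1..k} \<subseteq> sq K" for x y
  proof (rule image_subsetI)
    fix j assume j: "j \<in> {1..k}"
    have "redk k (j + of_bool (x \<and> y)) \<in> {1..k}" by (rule redk_in[OF assms(1)])
    then show "(a x j, b y (redk k (j + of_bool (x \<and> y)))) \<in> sq K"
      using assms(4)[OF j] assms(5) by (auto simp: sq_def)
  qed
  have beh: "is_behaviour K (prm K k a b)"
    unfolding is_behaviour_def prm_def
  proof (intro allI conjI)
    fix x y
    show "prob_space (ptm K {1..k} (\<lambda>_. 1 / real k) (\<lambda>j. (a x j, b y (redk k (j + of_bool (x \<and> y))))))"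
      by (rule prob_space_ptm[OF _ _ img]) (use assms(1) in auto)
  qed simp
  have em: "emeasure (prm K k a b x y) A = ennreal (real (card {j \<in> {1..k}. (a x j, b y (redk k (j + of_bool (x \<and> y)))) \<in> A}) / real k)"
    if A: "A \<in> sets (prm K k a b x y)" for x y A
  proof -
    from A have A': "A \<in> sets (sqM K)" by (simp add: prm_def)
    have "emeasure (prm K k a b x y) A = ennreal (\<Sum>j\<in>{j \<in> {1..k}. (a x j, b y (redk k (j + of_bool (x \<and> y)))) \<in> A}. 1 / real k)"
      unfolding prm_def by (rule emeasure_ptm[OF _ _ img A']) auto
    also have "\<dots> = ennreal (real (card {j \<in> {1..k}. (a x j, b y (redk k (j + of_bool (x \<and> y)))) \<in> A}) / real k)"
      by simp
    finally show ?thesis .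
  qed
  show ?thesis unfolding is_PR_box_def
    by (rule conjI[OF beh], rule exI[of _ k], rule exI[of _ a], rule exI[of _ b]) (use assms em in auto)
qed

lemma PR_alice:
  assumes "is_PR_box K \<nu>" "A \<in> sets borel" "A \<subseteq> {-K..K}"
  shows "emeasure (\<nu> x False) (A \<times> {-K..K}) = emeasure (\<nu> x True) (A \<times> {-K..K})"
proof -
  obtain k a b where kab: "k \<ge> 1" "\<And>y j. j \<in> {1..k} \<Longrightarrow> b y j \<in> {-K..K}"
    "\<And>x y. \<forall>A \<in> sets (\<nu> x y). emeasure (\<nu> x y) A =
       ennreal (real (card {j \<in> {1..k}. (a x j, b y (redk k (j + of_bool (x \<and> y)))) \<in> A}) / real k)"
    using assms(1) unfolding is_PR_box_def by blast
  have S: "A \<times> {-K..K} \<in> sets (\<nu> x y)" for y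
    using assms(1) rect_sets[OF assms(2) _ assms(3)] unfolding is_PR_box_def is_behaviour_def by auto
  have "{j \<in> {1..k}. (a x j, b y (redk k (j + of_bool (x \<and> y)))) \<in> A \<times> {-K..K}} = {j \<in> {1..k}. a x j \<in> A}" for y
    using kab(2)[OF redk_in[OF kab(1)]] by auto
  then have "emeasure (\<nu> x y) (A \<times> {-K..K}) = ennreal (real (card {j \<in> {1..k}. a x j \<in> A}) / real k)" for y
  proof -
    have "emeasure (\<nu> x y) (A \<times> {-K..K}) = ennreal (real (card {j \<in> {1..k}. (a x j, b y (redk k (j + of_bool (x \<and> y)))) \<in> A \<times> {-K..K}}) / real k)"
      using kab(3) S by blast
    then show ?thesis by (simp only: \<open>\<And>y. {j \<in> {1..k}. (a x j, b y (redk k (j + of_bool (x \<and> y)))) \<in> A \<times> {-K..K}} = {j \<in> {1..k}. a x j \<in> A}\<close>)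
  qed
  then show ?thesis by simp
qed

lemma PR_bob:
  assumes "is_PR_box K \<nu>" "B \<in> sets borel" "B \<subseteq> {-K..K}"
  shows "emeasure (\<nu> False y) ({-K..K} \<times> B) = emeasure (\<nu> True y) ({-K..K} \<times> B)"
proof -
  obtain k a b where kab: "k \<ge> 1" "\<And>x j. j \<in> {1..k} \<Longrightarrow> a x j \<in> {-K..K}"
    "\<And>x y. \<forall>A \<in> sets (\<nu> x y). emeasure (\<nu> x y) A =
       ennreal (real (card {j \<in> {1..k}. (a x j, b y (redk k (j + of_bool (x \<and> y)))) \<in> A}) / real k)"
    using assms(1) unfolding is_PR_box_def by blast
  have S: "{-K..K} \<times> B \<in> sets (\<nu> x y)" for x
    using assms(1) rect_sets[OF _ assms(2) _ assms(3)] unfolding is_PR_box_def is_behaviour_def by auto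
  have e: "{j \<in> {1..k}. (a x j, b y (redk k (j + of_bool (x \<and> y)))) \<in> {-K..K} \<times> B} = {j \<in> {1..k}. b y (redk k (j + of_bool (x \<and> y))) \<in> B}" for x
    using kab(2) by auto
  have c: "real (card {j \<in> {1..k}. b y (redk k (j + of_bool (x \<and> y))) \<in> B}) = real (card {j \<in> {1..k}. b y j \<in> B})" for x
  proof -
    have "real (card {j \<in> {1..k}. b y (redk k (j + of_bool (x \<and> y))) \<in> B}) =
       (\<Sum>j\<in>{1..k}. if b y (redk k (j + of_bool (x \<and> y))) \<in> B then 1 else 0)"
      by (rule card_filter_sum) simp
    also have "\<dots> = (\<Sum>j\<in>{1..k}. if b y j \<in> B then 1 else 0)"
    proof (cases "x \<and> y")
      case True
      then show ?thesis using sum_redk[OF kab(1), of "\<lambda>j. if b y j \<in> B then 1 else 0"] by simp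
    next
      case False
      then show ?thesis by (intro sum.cong) (auto simp: redk_id)
    qed
    also have "\<dots> = real (card {j \<in> {1..k}. b y j \<in> B})"
      by (rule card_filter_sum[symmetric]) simp
    finally show ?thesis .
  qed
  have f: "emeasure (\<nu> x y) ({-K..K} \<times> B) = ennreal (real (card {j \<in> {1..k}. b y j \<in> B}) / real k)" for x
  proof -
    have "emeasure (\<nu> x y) ({-K..K} \<times> B) = ennreal (real (card {j \<in> {1..k}. (a x j, b y (redk k (j + of_bool (x \<and> y)))) \<in> {-K..K} \<times> B}) / real k)"
      using kab(3) S by blast
    then show ?thesis by (simp only: e c)
  qed
  show ?thesis by (simp only: f)
qed

lemma conv_alice:
  assumes "in_conv_PR K \<mu>" "A \<in> sets borel" "A \<subseteq> {-K..K}"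
  shows "emeasure (\<mu> x False) (A \<times> {-K..K}) = emeasure (\<mu> x True) (A \<times> {-K..K})"
proof -
  obtain n c \<nu> where cv: "\<forall>i<n. c i \<ge> 0 \<and> is_PR_box K (\<nu> i)"
    "\<forall>x y. \<forall>A \<in> sets (\<mu> x y). emeasure (\<mu> x y) A = (\<Sum>i<(n::nat). ennreal (c i) * emeasure (\<nu> i x y) A)"
    using assms(1) unfolding in_conv_PR_def by blast
  have S: "A \<times> {-K..K} \<in> sets (\<mu> x y)" for y
    using assms(1) rect_sets[OF assms(2) _ assms(3)] unfolding in_conv_PR_def is_behaviour_def by auto
  have "emeasure (\<nu> i x False) (A \<times> {-K..K}) = emeasure (\<nu> i x True) (A \<times> {-K..K})" if "i < n" for i
    using cv(1) that PR_alice[OF _ assms(2,3)] by blast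
  then show ?thesis using cv(2) S by (auto intro!: sum.cong)
qed

lemma conv_bob:
  assumes "in_conv_PR K \<mu>" "B \<in> sets borel" "B \<subseteq> {-K..K}"
  shows "emeasure (\<mu> False y) ({-K..K} \<times> B) = emeasure (\<mu> True y) ({-K..K} \<times> B)"
proof -
  obtain n c \<nu> where cv: "\<forall>i<n. c i \<ge> 0 \<and> is_PR_box K (\<nu> i)"
    "\<forall>x y. \<forall>A \<in> sets (\<mu> x y). emeasure (\<mu> x y) A = (\<Sum>i<(n::nat). ennreal (c i) * emeasure (\<nu> i x y) A)"
    using assms(1) unfolding in_conv_PR_def by blast
  have S: "{-K..K} \<times> B \<in> sets (\<mu> x y)" for x
    using assms(1) rect_sets[OF _ assms(2) _ assms(3)] unfolding in_conv_PR_def is_behaviour_def by auto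
  have "emeasure (\<nu> i False y) ({-K..K} \<times> B) = emeasure (\<nu> i True y) ({-K..K} \<times> B)" if "i < n" for i
    using cv(1) that PR_bob[OF _ assms(2,3)] by blast
  then show ?thesis using cv(2) S by (auto intro!: sum.cong)
qed

lemma cts_cont: "a < b \<Longrightarrow> continuous_on UNIV (cts_step a b)"
  by (rule uniformly_continuous_imp_continuous[OF cts_step_uniformly_continuous])

lemma cts_bounded: "cts_step a b x \<in> {0..1}" if "a < b"
  using that by (auto simp: cts_step_def field_simps)

lemma cdf_le_from_cts:
  assumes D0: "real_distribution D0" and D1: "real_distribution D1"
    and eq: "\<And>a b. a < b \<Longrightarrow> integral\<^sup>L D0 (cts_step a b) = integral\<^sup>L D1 (cts_step a b)"
  shows "cdf D0 x \<le> cdf D1 x"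
proof -
  have le: "cdf D0 x \<le> cdf D1 y" if "x < y" for y
  proof -
    have "cdf D0 x \<le> integral\<^sup>L D0 (cts_step x y)" using real_distribution.cdf_cts_step(1)[OF D0 that] .
    also have "\<dots> = integral\<^sup>L D1 (cts_step x y)" using eq[OF that] .
    also have "\<dots> \<le> cdf D1 y" using real_distribution.cdf_cts_step(2)[OF D1 that] .
    finally show ?thesis .
  qed
  have "continuous (at_right x) (cdf D1)"
    using D1 by (simp add: finite_borel_measure.cdf_is_right_cont real_distribution.finite_borel_measure_M)
  then have lim: "(cdf D1 \<longlongrightarrow> cdf D1 x) (at_right x)"
    by (simp add: continuous_within)
  show ?thesis
  proof (rule tendsto_lowerbound[OF lim])
    show "\<forall>\<^sub>F y in at_right x. cdf D0 x \<le> cdf D1 y"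
      by (rule eventually_at_rightI[of x "x+1"]) (auto intro: le)
  qed simp
qed

lemma marg_eq:
  fixes \<pi> :: "real \<times> real \<Rightarrow> real"
  assumes P0: "prob_space M0" and P1: "prob_space M1"
    and S0: "sets M0 = sets (sqM K)" and S1: "sets M1 = sets (sqM K)"
    and pm: "\<pi> \<in> borel_measurable (sqM K)"
    and eq: "\<And>a b. a < b \<Longrightarrow> (\<integral>s. cts_step a b (\<pi> s) \<partial>M0) = (\<integral>s. cts_step a b (\<pi> s) \<partial>M1)"
  shows "distr M0 borel \<pi> = distr M1 borel \<pi>"
proof -
  have pm0: "\<pi> \<in> borel_measurable M0" using pm measurable_cong_sets[OF S0 refl] by blast
  have pm1: "\<pi> \<in> borel_measurable M1" using pm measurable_cong_sets[OF S1 refl] by blast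
  have D0: "real_distribution (distr M0 borel \<pi>)"
    using prob_space.real_distribution_distr[OF P0 pm0] .
  have D1: "real_distribution (distr M1 borel \<pi>)"
    using prob_space.real_distribution_distr[OF P1 pm1] .
  have ieq: "integral\<^sup>L (distr M0 borel \<pi>) (cts_step a b) = integral\<^sup>L (distr M1 borel \<pi>) (cts_step a b)"
    if "a < b" for a b
  proof -
    have cm: "cts_step a b \<in> borel_measurable borel"
      by (rule borel_measurable_continuous_onI[OF cts_cont[OF that]])
    show ?thesis
      using eq[OF that] integral_distr[OF pm0 cm] integral_distr[OF pm1 cm] by simp
  qed
  have "cdf (distr M0 borel \<pi>) = cdf (distr M1 borel \<pi>)"
  proof
    fix x
    show "cdf (distr M0 borel \<pi>) x = cdf (distr M1 borel \<pi>) x"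
      using cdf_le_from_cts[OF D0 D1 ieq] cdf_le_from_cts[OF D1 D0 ieq[symmetric]] by (simp add: antisym)
  qed
  then show ?thesis by (rule cdf_unique[OF D0 D1])
qed

lemma fst_meas: "fst \<in> borel_measurable (sqM K)"
proof -
  have "fst \<in> borel_measurable (borel::(real\<times>real) measure)" by (subst borel_prod[symmetric]) simp
  then show ?thesis unfolding sqM_def by (rule measurable_restrict_space1)
qed

lemma snd_meas: "snd \<in> borel_measurable (sqM K)"
proof -
  have "snd \<in> borel_measurable (borel::(real\<times>real) measure)" by (subst borel_prod[symmetric]) simp
  then show ?thesis unfolding sqM_def by (rule measurable_restrict_space1)
qed

lemma limit_marg:
  fixes \<pi> :: "real \<times> real \<Rightarrow> real"
  assumes P0: "prob_space M0" and P1: "prob_space M1"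
    and S0: "sets M0 = sets (sqM K)" and S1: "sets M1 = sets (sqM K)"
    and SN0: "\<And>n. sets (N0 n) = sets (sqM K)" and SN1: "\<And>n. sets (N1 n) = sets (sqM K)"
    and pm: "\<pi> \<in> borel_measurable (sqM K)" and pc: "continuous_on (sq K) \<pi>"
    and Neq: "\<And>n. distr (N0 n) borel \<pi> = distr (N1 n) borel \<pi>"
    and c0: "\<And>f :: real \<times> real \<Rightarrow> real. continuous_on (sq K) f \<and> bounded (f ` sq K) \<Longrightarrow> (\<lambda>n. \<integral>t. f t \<partial>(N0 n)) \<longlonglongrightarrow> (\<integral>t. f t \<partial>M0)"
    and c1: "\<And>f :: real \<times> real \<Rightarrow> real. continuous_on (sq K) f \<and> bounded (f ` sq K) \<Longrightarrow> (\<lambda>n. \<integral>t. f t \<partial>(N1 n)) \<longlonglongrightarrow> (\<integral>t. f t \<partial>M1)"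
  shows "distr M0 borel \<pi> = distr M1 borel \<pi>"
proof (rule marg_eq[OF P0 P1 S0 S1 pm])
  fix a b :: real assume ab: "a < b"
  let ?f = "\<lambda>s. cts_step a b (\<pi> s)"
  have fc: "continuous_on (sq K) ?f \<and> bounded (?f ` sq K)"
  proof
    show "continuous_on (sq K) ?f"
      by (rule continuous_on_compose2[OF cts_cont[OF ab] pc]) auto
    have "?f ` sq K \<subseteq> {0..1}" using cts_bounded[OF ab] by auto
    then show "bounded (?f ` sq K)" by (rule bounded_subset[OF bounded_closed_interval])
  qed
  have cm: "cts_step a b \<in> borel_measurable borel"
    by (rule borel_measurable_continuous_onI[OF cts_cont[OF ab]])
  have "(\<integral>t. ?f t \<partial>(N0 n)) = (\<integral>t. ?f t \<partial>(N1 n))" for n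
  proof -
    have pm0: "\<pi> \<in> borel_measurable (N0 n)" using pm measurable_cong_sets[OF SN0 refl] by blast
    have pm1: "\<pi> \<in> borel_measurable (N1 n)" using pm measurable_cong_sets[OF SN1 refl] by blast
    show ?thesis using integral_distr[OF pm0 cm] integral_distr[OF pm1 cm] Neq[of n] by simp
  qed
  then have "(\<lambda>n. \<integral>t. ?f t \<partial>(N1 n)) \<longlonglongrightarrow> (\<integral>t. ?f t \<partial>M0)" using c0[OF fc] by simp
  then show "(\<integral>s. ?f s \<partial>M0) = (\<integral>s. ?f s \<partial>M1)" using c1[OF fc] by (rule LIMSEQ_unique)
qed

lemma distr_alice:
  assumes "in_conv_PR K \<mu>"
  shows "distr (\<mu> x False) borel fst = distr (\<mu> x True) borel fst"
proof (rule measure_eqI)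
  have S: "sets (\<mu> x y) = sets (sqM K)" for y using assms unfolding in_conv_PR_def is_behaviour_def by auto
  then have sp: "space (\<mu> x y) = sq K" for y by (metis sets_eq_imp_space_eq space_sqM)
  have fm: "fst \<in> borel_measurable (\<mu> x y)" for y using fst_meas measurable_cong_sets[OF S refl] by blast
  show "sets (distr (\<mu> x False) borel fst) = sets (distr (\<mu> x True) borel fst)" by simp
  fix A assume A: "A \<in> sets (distr (\<mu> x False) borel fst)"
  then have Ab: "A \<in> sets borel" by simp
  have pre: "fst -` A \<inter> space (\<mu> x y) = (A \<inter> {-K..K}) \<times> {-K..K}" for y
    unfolding sp by (auto simp: sq_def)
  have "emeasure (distr (\<mu> x False) borel fst) A = emeasure (\<mu> x False) ((A \<inter> {-K..K}) \<times> {-K..K})"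
    using emeasure_distr[OF fm Ab] pre by simp
  also have "\<dots> = emeasure (\<mu> x True) ((A \<inter> {-K..K}) \<times> {-K..K})"
    by (rule conv_alice[OF assms]) (use Ab in auto)
  also have "\<dots> = emeasure (distr (\<mu> x True) borel fst) A"
    using emeasure_distr[OF fm Ab] pre by simp
  finally show "emeasure (distr (\<mu> x False) borel fst) A = emeasure (distr (\<mu> x True) borel fst) A" .
qed

lemma distr_bob:
  assumes "in_conv_PR K \<mu>"
  shows "distr (\<mu> False y) borel snd = distr (\<mu> True y) borel snd"
proof (rule measure_eqI)
  have S: "sets (\<mu> x y) = sets (sqM K)" for x using assms unfolding in_conv_PR_def is_behaviour_def by auto
  then have sp: "space (\<mu> x y) = sq K" for x by (metis sets_eq_imp_space_eq space_sqM)
  have fm: "snd \<in> borel_measurable (\<mu> x y)" for x using snd_meas measurable_cong_sets[OF S refl] by blast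
  show "sets (distr (\<mu> False y) borel snd) = sets (distr (\<mu> True y) borel snd)" by simp
  fix A assume A: "A \<in> sets (distr (\<mu> False y) borel snd)"
  then have Ab: "A \<in> sets borel" by simp
  have pre: "snd -` A \<inter> space (\<mu> x y) = {-K..K} \<times> (A \<inter> {-K..K})" for x
    unfolding sp by (auto simp: sq_def)
  have "emeasure (distr (\<mu> False y) borel snd) A = emeasure (\<mu> False y) ({-K..K} \<times> (A \<inter> {-K..K}))"
    using emeasure_distr[OF fm Ab] pre by simp
  also have "\<dots> = emeasure (\<mu> True y) ({-K..K} \<times> (A \<inter> {-K..K}))"
    by (rule conv_bob[OF assms]) (use Ab in auto)
  also have "\<dots> = emeasure (distr (\<mu> True y) borel snd) A"
    using emeasure_distr[OF fm Ab] pre by simp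
  finally show "emeasure (distr (\<mu> False y) borel snd) A = emeasure (distr (\<mu> True y) borel snd) A" .
qed

lemma subset_dir:
  assumes beh: "is_behaviour K \<mu>" and conv: "\<And>n. in_conv_PR K (\<mu>s n)" and wc: "cw_weak_conv K \<mu>s \<mu>"
  shows "no_signaling K \<mu>"
proof -
  have S: "sets (\<mu> x y) = sets (sqM K)" "prob_space (\<mu> x y)" for x y using beh unfolding is_behaviour_def by auto
  have SN: "sets (\<mu>s n x y) = sets (sqM K)" for n x y using conv[of n] unfolding in_conv_PR_def is_behaviour_def by auto
  have sp: "space (\<mu> x y) = sq K" for x y by (metis S(1) sets_eq_imp_space_eq space_sqM)
  have cfst: "continuous_on (sq K) fst" by (rule continuous_on_fst[OF continuous_on_id])
  have csnd: "continuous_on (sq K) snd" by (rule continuous_on_snd[OF continuous_on_id])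
  have wc': "\<And>f :: real \<times> real \<Rightarrow> real. continuous_on (sq K) f \<and> bounded (f ` sq K) \<Longrightarrow> (\<lambda>n. \<integral>t. f t \<partial>(\<mu>s n x y)) \<longlonglongrightarrow> (\<integral>t. f t \<partial>\<mu> x y)" for x y
    using wc unfolding cw_weak_conv_def by blast
  have DA: "distr (\<mu> x False) borel fst = distr (\<mu> x True) borel fst" for x
    by (rule limit_marg[OF S(2) S(2) S(1) S(1) SN SN fst_meas cfst distr_alice[OF conv] wc' wc'])
  have DB: "distr (\<mu> False y) borel snd = distr (\<mu> True y) borel snd" for y
    by (rule limit_marg[OF S(2) S(2) S(1) S(1) SN SN snd_meas csnd distr_bob[OF conv] wc' wc'])
  show ?thesis unfolding no_signaling_def
  proof (intro conjI beh allI impI)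
    fix x A assume A: "A \<in> sets (borel :: real measure) \<and> A \<subseteq> {-K..K}"
    have fm: "fst \<in> measurable (\<mu> x y) borel" for y using fst_meas measurable_cong_sets[OF S(1) refl] by blast
    have pre: "fst -` A \<inter> space (\<mu> x y) = A \<times> {-K..K}" for y using A unfolding sp by (auto simp: sq_def)
    have "measure (\<mu> x y) (A \<times> {-K..K}) = measure (distr (\<mu> x y) borel fst) A" for y
      using measure_distr[OF fm, of A] A pre by simp
    then show "measure (\<mu> x False) (A \<times> {-K..K}) = measure (\<mu> x True) (A \<times> {-K..K})"
      using DA[of x] by simp
  next
    fix y B assume B: "B \<in> sets (borel :: real measure) \<and> B \<subseteq> {-K..K}"
    have fm: "snd \<in> measurable (\<mu> x y) borel" for x using snd_meas measurable_cong_sets[OF S(1) refl] by blast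
    have pre: "snd -` B \<inter> space (\<mu> x y) = {-K..K} \<times> B" for x using B unfolding sp by (auto simp: sq_def)
    have "measure (\<mu> x y) ({-K..K} \<times> B) = measure (distr (\<mu> x y) borel snd) B" for x
      using measure_distr[OF fm, of B] B pre by simp
    then show "measure (\<mu> False y) ({-K..K} \<times> B) = measure (\<mu> True y) ({-K..K} \<times> B)"
      using DB[of y] by simp
  qed
qed

definition zc :: "real \<Rightarrow> nat \<Rightarrow> nat \<Rightarrow> nat \<Rightarrow> real \<times> real" where
  "zc K m i j = (pt K m i 0 1, pt K m j 0 1)"

lemma cont_meas:
  assumes "continuous_on (sq K) f" "sets M = sets (sqM K)"
  shows "(f :: real \<times> real \<Rightarrow> real) \<in> borel_measurable M"
proof -
  have "f \<in> borel_measurable (sqM K)" unfolding sqM_def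
    by (rule borel_measurable_continuous_on_restrict[OF assms(1)])
  then show ?thesis using measurable_cong_sets[OF assms(2) refl] by blast
qed

lemma cell_approx:
  assumes K: "K > 0" and m: "m \<ge> 1" and P: "prob_space M" and S: "sets M = sets (sqM K)"
    and fc: "continuous_on (sq K) f" and fb: "bounded (f ` sq K)"
    and eps: "\<And>s. s \<in> sq K \<Longrightarrow> \<bar>f s - f (zc K m (cellix K m (fst s)) (cellix K m (snd s)))\<bar> \<le> e"
  shows "\<bar>(\<integral>s. f s \<partial>M) - (\<Sum>i<m. \<Sum>j<m. f (zc K m i j) * measure M (cellp K m i j))\<bar> \<le> e"
proof -
  interpret prob_space M by (rule P)
  have sp: "space M = sq K" by (metis S sets_eq_imp_space_eq space_sqM)
  have fm: "f \<in> borel_measurable M" by (rule cont_meas[OF fc S])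
  obtain B where B: "\<And>s. s \<in> sq K \<Longrightarrow> norm (f s) \<le> B" using fb unfolding bounded_iff by auto
  have fi: "integrable M f"
    by (rule integrable_const_bound[of _ B]) (use B sp fm in auto)
  have cs: "cellp K m i j \<in> sets M" for i j using cellp_sets S by auto
  define g where "g s = (\<Sum>i<m. \<Sum>j<m. f (zc K m i j) * indicator (cellp K m i j) s)" for s
  have ii: "integrable M (\<lambda>s. f (zc K m i j) * indicator (cellp K m i j) s)" for i j
  proof -
    have "integrable M (indicator (cellp K m i j) :: real \<times> real \<Rightarrow> real)"
      by (rule integrable_real_indicator[OF cs[of i j]]) (simp add: less_top[symmetric])
    then show ?thesis by simp
  qed
  have gi: "integrable M g" unfolding g_def by (intro Bochner_Integration.integrable_sum ii)
  have ig: "(\<integral>s. g s \<partial>M) = (\<Sum>i<m. \<Sum>j<m. f (zc K m i j) * measure M (cellp K m i j))"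
  proof -
    have "(\<integral>s. g s \<partial>M) = (\<Sum>i<m. \<integral>s. (\<Sum>j<m. f (zc K m i j) * indicator (cellp K m i j) s) \<partial>M)"
      unfolding g_def by (rule Bochner_Integration.integral_sum) (intro Bochner_Integration.integrable_sum ii)
    also have "\<dots> = (\<Sum>i<m. \<Sum>j<m. \<integral>s. f (zc K m i j) * indicator (cellp K m i j) s \<partial>M)"
      by (intro sum.cong refl Bochner_Integration.integral_sum ii)
    also have "\<dots> = (\<Sum>i<m. \<Sum>j<m. f (zc K m i j) * measure M (cellp K m i j))"
    proof (intro sum.cong refl)
      fix i j
      have "cellp K m i j \<inter> space M = cellp K m i j" using sets.sets_into_space[OF cs[of i j]] by blast
      then show "(\<integral>s. f (zc K m i j) * indicator (cellp K m i j) s \<partial>M) = f (zc K m i j) * measure M (cellp K m i j)"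
        by simp
    qed
    finally show ?thesis .
  qed
  have gv: "g s = f (zc K m (cellix K m (fst s)) (cellix K m (snd s)))" if s: "s \<in> sq K" for s
  proof -
    have "g s = (\<Sum>i<m. \<Sum>j<m. if i = cellix K m (fst s) \<and> j = cellix K m (snd s) then f (zc K m i j) else 0)"
      unfolding g_def using s by (intro sum.cong) (auto simp: cellp_def indicator_def)
    also have "\<dots> = (\<Sum>i<m. if i = cellix K m (fst s) then f (zc K m i (cellix K m (snd s))) else 0)"
      using cellix_lt[OF m] by (intro sum.cong refl) (auto simp: sum.delta' if_distrib cong: if_cong)
    also have "\<dots> = f (zc K m (cellix K m (fst s)) (cellix K m (snd s)))"
      using cellix_lt[OF m] by (simp add: sum.delta')
    finally show ?thesis .
  qed
  have dif: "\<bar>f x - g x\<bar> \<le> e" if "x \<in> space M" for x using eps[of x] gv[of x] that sp by simp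
  have "(\<integral>s. f s \<partial>M) - (\<integral>s. g s \<partial>M) = (\<integral>s. f s - g s \<partial>M)"
    using fi gi by simp
  moreover have "(\<integral>s. f s - g s \<partial>M) \<le> e"
    by (rule integral_le_const) (use fi gi dif in \<open>auto intro!: AE_I2 simp: abs_le_iff\<close>)
  moreover have "(\<integral>s. f s - g s \<partial>M) \<ge> -e"
  proof (rule integral_ge_const)
    show "integrable M (\<lambda>s. f s - g s)" using fi gi by simp
    show "AE x in M. - e \<le> f x - g x"
    proof (rule AE_I2)
      fix x assume "x \<in> space M"
      from dif[OF this] show "- e \<le> f x - g x" by linarith
    qed
  qed
  ultimately show ?thesis using ig by linarith
qed

definition rowc :: "real \<Rightarrow> nat \<Rightarrow> nat \<Rightarrow> real set" where
  "rowc K m i = {t \<in> {-K..K}. cellix K m t = i}"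

lemma rowc_sets: "rowc K m i \<in> sets borel"
proof -
  have "cellix K m -` {i} \<inter> space borel \<in> sets borel"
    by (rule measurable_sets[OF meas_cellix]) simp
  then have "{t. cellix K m t = i} \<in> sets borel" by (simp add: vimage_def)
  then show ?thesis unfolding rowc_def by (simp add: Collect_conj_eq[symmetric] sets.Int Int_def)
qed

lemma rowc_sub: "rowc K m i \<subseteq> {-K..K}" by (auto simp: rowc_def)

lemma cell_sums:
  assumes m: "m \<ge> 1" and P: "prob_space M" and S: "sets M = sets (sqM K)"
  shows "(\<Sum>j<m. measure M (cellp K m i j)) = measure M (rowc K m i \<times> {-K..K})"
    and "(\<Sum>i<m. measure M (cellp K m i j)) = measure M ({-K..K} \<times> rowc K m j)"
    and "(\<Sum>i<m. \<Sum>j<m. measure M (cellp K m i j)) = 1"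
proof -
  interpret prob_space M by (rule P)
  have sp: "space M = sq K" by (metis S sets_eq_imp_space_eq space_sqM)
  have cs: "cellp K m i j \<in> sets M" for i j using cellp_sets S by auto
  have "measure M (\<Union>j\<in>{..<m}. cellp K m i j) = (\<Sum>j<m. measure M (cellp K m i j))" for i
  proof (rule finite_measure_finite_Union)
    show "(\<lambda>j. cellp K m i j) ` {..<m} \<subseteq> sets M" using cs by auto
    show "disjoint_family_on (\<lambda>j. cellp K m i j) {..<m}" unfolding disjoint_family_on_def cellp_def by auto
  qed simp
  moreover have "(\<Union>j\<in>{..<m}. cellp K m i j) = rowc K m i \<times> {-K..K}" for i
    using cellix_lt[OF m] by (auto simp: cellp_def rowc_def sq_def)
  ultimately show r: "(\<Sum>j<m. measure M (cellp K m i j)) = measure M (rowc K m i \<times> {-K..K})" for i by simp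
  have "measure M (\<Union>i\<in>{..<m}. cellp K m i j) = (\<Sum>i<m. measure M (cellp K m i j))"
  proof (rule finite_measure_finite_Union)
    show "(\<lambda>i. cellp K m i j) ` {..<m} \<subseteq> sets M" using cs by auto
    show "disjoint_family_on (\<lambda>i. cellp K m i j) {..<m}" unfolding disjoint_family_on_def cellp_def by auto
  qed simp
  moreover have "(\<Union>i\<in>{..<m}. cellp K m i j) = {-K..K} \<times> rowc K m j"
    using cellix_lt[OF m] by (auto simp: cellp_def rowc_def sq_def)
  ultimately show "(\<Sum>i<m. measure M (cellp K m i j)) = measure M ({-K..K} \<times> rowc K m j)" by simp
  have rs: "rowc K m i \<times> {-K..K} \<in> sets M" for i
  proof -
    have "rowc K m i \<times> {-K..K} \<in> sets (sqM K)" by (rule rect_sets[OF rowc_sets _ rowc_sub]) auto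
    then show ?thesis using S by simp
  qed
  have "measure M (\<Union>i\<in>{..<m}. rowc K m i \<times> {-K..K}) = (\<Sum>i<m. measure M (rowc K m i \<times> {-K..K}))"
  proof (rule finite_measure_finite_Union)
    show "(\<lambda>i. rowc K m i \<times> {-K..K}) ` {..<m} \<subseteq> sets M" using rs by auto
    show "disjoint_family_on (\<lambda>i. rowc K m i \<times> {-K..K}) {..<m}" unfolding disjoint_family_on_def rowc_def by auto
  qed simp
  moreover have "(\<Union>i\<in>{..<m}. rowc K m i \<times> {-K..K}) = sq K"
    using cellix_lt[OF m] by (auto simp: rowc_def sq_def)
  ultimately show "(\<Sum>i<m. \<Sum>j<m. measure M (cellp K m i j)) = 1"
    using r prob_space sp by simp
qed

lemma p_dns:
  assumes m: "m \<ge> 1" and ns: "no_signaling K \<mu>"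
  shows "dns m (\<lambda>x y i j. measure (\<mu> x y) (cellp K m i j))"
proof -
  have P: "prob_space (\<mu> x y)" "sets (\<mu> x y) = sets (sqM K)" for x y
    using ns unfolding no_signaling_def is_behaviour_def by auto
  show ?thesis unfolding dns_def
  proof (intro conjI allI)
    fix x i
    show "(\<Sum>j<m. measure (\<mu> x False) (cellp K m i j)) = (\<Sum>j<m. measure (\<mu> x True) (cellp K m i j))"
    proof -
      have "\<forall>x A. A \<in> sets borel \<and> A \<subseteq> {-K..K} \<longrightarrow> measure (\<mu> x False) (A \<times> {-K..K}) = measure (\<mu> x True) (A \<times> {-K..K})"
        using ns unfolding no_signaling_def by blast
      then have "measure (\<mu> x False) (rowc K m i \<times> {-K..K}) = measure (\<mu> x True) (rowc K m i \<times> {-K..K})"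
        using rowc_sets[of K m i] rowc_sub[of K m i] by blast
      then show ?thesis using cell_sums(1)[OF m P] by simp
    qed
  next
    fix y j
    show "(\<Sum>i<m. measure (\<mu> False y) (cellp K m i j)) = (\<Sum>i<m. measure (\<mu> True y) (cellp K m i j))"
    proof -
      have "\<forall>y B. B \<in> sets borel \<and> B \<subseteq> {-K..K} \<longrightarrow> measure (\<mu> False y) ({-K..K} \<times> B) = measure (\<mu> True y) ({-K..K} \<times> B)"
        using ns unfolding no_signaling_def by blast
      then have "measure (\<mu> False y) ({-K..K} \<times> rowc K m j) = measure (\<mu> True y) ({-K..K} \<times> rowc K m j)"
        using rowc_sets[of K m j] rowc_sub[of K m j] by blast
      then show ?thesis using cell_sums(2)[OF m P] by simp
    qed
  qed simp
qed

lemma boxq_total: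
  assumes "\<And>x t. t \<in> {1..k} \<Longrightarrow> \<alpha> x t < m" "\<And>y t. t \<in> {1..k} \<Longrightarrow> \<beta> y t < m" "k \<ge> 1"
  shows "(\<Sum>i<m. \<Sum>j<m. boxq k \<alpha> \<beta> x y i j) = 1"
proof -
  have "(\<Sum>i<m. \<Sum>j<m. boxq k \<alpha> \<beta> x y i j) = (\<Sum>i<m. (\<Sum>t\<in>{1..k}. if \<alpha> x t = i then 1 else 0) / real k)"
    using boxq_rows[OF assms(2,3)] by simp
  also have "\<dots> = (\<Sum>i<m. (\<Sum>t\<in>{1..k}. if True \<and> \<alpha> x t = i then 1 else 0)) / real k"
    by (simp add: sum_divide_distrib)
  also have "\<dots> = (\<Sum>t\<in>{1..k}. if True then 1 else 0) / real k"
    by (subst sum_indicator_partition) (use assms(1) in auto)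
  also have "\<dots> = 1" using assms(3) by simp
  finally show ?thesis .
qed

lemma sum_Sigma_filter:
  fixes h :: "nat \<Rightarrow> real"
  shows "(\<Sum>z\<in>{z \<in> Sigma {..<n} (\<lambda>l. {1..kk l}). P z}. h (fst z) / real (kk (fst z))) =
         (\<Sum>l<n. h l * real (card {t \<in> {1..kk l}. P (l, t)}) / real (kk l))"
proof -
  have seq: "{z \<in> Sigma {..<n} (\<lambda>l. {1..kk l}). P z} = Sigma {..<n} (\<lambda>l. {t \<in> {1..kk l}. P (l, t)})" by auto
  have "(\<Sum>l<n. h l * real (card {t \<in> {1..kk l}. P (l, t)}) / real (kk l)) =
        (\<Sum>l<n. \<Sum>t\<in>{t \<in> {1..kk l}. P (l, t)}. h l / real (kk l))"
    by (simp add: field_simps)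
  also have "\<dots> = (\<Sum>(l,t)\<in>Sigma {..<n} (\<lambda>l. {t \<in> {1..kk l}. P (l, t)}). h l / real (kk l))"
    by (rule sum.Sigma) auto
  also have "\<dots> = (\<Sum>z\<in>Sigma {..<n} (\<lambda>l. {t \<in> {1..kk l}. P (l, t)}). h (fst z) / real (kk (fst z)))"
    by (simp add: split_def)
  finally show ?thesis unfolding seq by simp
qed

lemma approx_m:
  assumes K: "K > 0" and m: "m \<ge> 1" and ns: "no_signaling K \<mu>"
  shows "\<exists>\<nu>. in_conv_PR K \<nu> \<and> (\<forall>x y i j. i < m \<longrightarrow> j < m \<longrightarrow>
           measure (\<nu> x y) (cellp K m i j) = measure (\<mu> x y) (cellp K m i j))"
proof -
  define p where "p x y i j = measure (\<mu> x y) (cellp K m i j)" for x y i j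
  have PM: "prob_space (\<mu> x y)" "sets (\<mu> x y) = sets (sqM K)" for x y
    using ns unfolding no_signaling_def is_behaviour_def by auto
  have "dns m p" unfolding p_def by (rule p_dns[OF m ns])
  then have "decomposable m p" by (rule decomp)
  then obtain n :: nat and c kk \<alpha> \<beta> where
    H: "(\<forall>l<n. c l \<ge> 0 \<and> kk l \<ge> 1 \<and> (\<forall>x t. t \<in> {1..kk l} \<longrightarrow> \<alpha> l x t < m) \<and> (\<forall>y t. t \<in> {1..kk l} \<longrightarrow> \<beta> l y t < m))"
       "(\<forall>x y i j. i < m \<longrightarrow> j < m \<longrightarrow> p x y i j = (\<Sum>l<n. c l * boxq (kk l) (\<alpha> l) (\<beta> l) x y i j))"
    unfolding decomposable_def by blast
  have H1: "\<And>l. l < n \<Longrightarrow> c l \<ge> 0 \<and> kk l \<ge> 1 \<and> (\<forall>x t. t \<in> {1..kk l} \<longrightarrow> \<alpha> l x t < m) \<and> (\<forall>y t. t \<in> {1..kk l} \<longrightarrow> \<beta> l y t < m)"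
    using H(1) by blast
  have H2: "\<And>x y i j. i < m \<Longrightarrow> j < m \<Longrightarrow> p x y i j = (\<Sum>l<n. c l * boxq (kk l) (\<alpha> l) (\<beta> l) x y i j)"
    using H(2) by blast
  have csum: "(\<Sum>l<n. c l) = 1"
  proof -
    have "1 = (\<Sum>i<m. \<Sum>j<m. p False False i j)" unfolding p_def using cell_sums(3)[OF m PM] by simp
    also have "\<dots> = (\<Sum>i<m. \<Sum>j<m. \<Sum>l<n. c l * boxq (kk l) (\<alpha> l) (\<beta> l) False False i j)"
      using H2 by simp
    also have "\<dots> = (\<Sum>l<n. c l * (\<Sum>i<m. \<Sum>j<m. boxq (kk l) (\<alpha> l) (\<beta> l) False False i j))"
    proof -
      have "(\<Sum>i<m. \<Sum>j<m. \<Sum>l<n. c l * boxq (kk l) (\<alpha> l) (\<beta> l) False False i j)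
          = (\<Sum>i<m. \<Sum>l<n. \<Sum>j<m. c l * boxq (kk l) (\<alpha> l) (\<beta> l) False False i j)"
        by (rule sum.cong[OF refl], rule sum.swap)
      also have "\<dots> = (\<Sum>l<n. \<Sum>i<m. \<Sum>j<m. c l * boxq (kk l) (\<alpha> l) (\<beta> l) False False i j)"
        by (rule sum.swap)
      also have "\<dots> = (\<Sum>l<n. c l * (\<Sum>i<m. \<Sum>j<m. boxq (kk l) (\<alpha> l) (\<beta> l) False False i j))"
        by (simp add: sum_distrib_left)
      finally show ?thesis .
    qed
    also have "\<dots> = (\<Sum>l<n. c l)"
      by (intro sum.cong refl) (subst boxq_total, use H1 in auto)
    finally show ?thesis by simp
  qed
  define a where "a l x t = pt K m (\<alpha> l x t) t (kk l)" for l x t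
  define b where "b l y t = pt K m (\<beta> l y t) t (kk l)" for l y t
  define \<nu> where "\<nu> l = prm K (kk l) (a l) (b l)" for l
  have ca: "cellix K m (a l x t) = \<alpha> l x t" if "l < n" "t \<in> {1..kk l}" for l x t
    unfolding a_def by (rule cellix_pt) (use K m H1 that in auto)
  have cb: "cellix K m (b l y t) = \<beta> l y t" if "l < n" "t \<in> {1..kk l}" for l y t
    unfolding b_def by (rule cellix_pt) (use K m H1 that in auto)
  have ain: "a l x t \<in> {-K..K}" if "l < n" "t \<in> {1..kk l}" for l x t
    unfolding a_def by (rule pt_in) (use K m H1 that in auto)
  have bin: "b l y t \<in> {-K..K}" if "l < n" "t \<in> {1..kk l}" for l y t
    unfolding b_def by (rule pt_in) (use K m H1 that in auto)
  have PR: "is_PR_box K (\<nu> l)" if l: "l < n" for l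
    unfolding \<nu>_def
  proof (rule prm_PR)
    show "kk l \<ge> 1" using H1 l by auto
    show "inj_on (a l x) {1..kk l}" for x
    proof (rule inj_onI)
      fix t t' assume t: "t \<in> {1..kk l}" "t' \<in> {1..kk l}" "a l x t = a l x t'"
      then have "\<alpha> l x t = \<alpha> l x t'" using ca[OF l t(1), of x] ca[OF l t(2), of x] t(3) by metis
      then show "t = t'" using t pt_inj[OF K m, of "\<alpha> l x t" t "kk l" t'] H1[OF l] unfolding a_def by auto
    qed
    show "inj_on (b l y) {1..kk l}" for y
    proof (rule inj_onI)
      fix t t' assume t: "t \<in> {1..kk l}" "t' \<in> {1..kk l}" "b l y t = b l y t'"
      then have "\<beta> l y t = \<beta> l y t'" using cb[OF l t(1), of y] cb[OF l t(2), of y] t(3) by metis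
      then show "t = t'" using t pt_inj[OF K m, of "\<beta> l y t" t "kk l" t'] H1[OF l] unfolding b_def by auto
    qed
    show "a l x t \<in> {-K..K}" if "t \<in> {1..kk l}" for x t using ain[OF l that] .
    show "b l y t \<in> {-K..K}" if "t \<in> {1..kk l}" for y t using bin[OF l that] .
  qed
  define I where "I = Sigma {..<n} (\<lambda>l. {1..kk l})"
  define w where "w z = c (fst z) / real (kk (fst z))" for z :: "nat \<times> nat"
  define g where "g x y z = (a (fst z) x (snd z), b (fst z) y (redk (kk (fst z)) (snd z + of_bool (x \<and> y))))" for x y z
  define \<mu>s where "\<mu>s x y = ptm K I w (g x y)" for x y
  have finI: "finite I" unfolding I_def by auto
  have wnn: "w z \<ge> 0" if "z \<in> I" for z using that H1 unfolding I_def w_def by auto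
  have gin: "g x y ` I \<subseteq> sq K" for x y
  proof
    fix s assume "s \<in> g x y ` I"
    then obtain l t where lt: "l < n" "t \<in> {1..kk l}" "s = g x y (l, t)" unfolding I_def by auto
    have "redk (kk l) (t + of_bool (x \<and> y)) \<in> {1..kk l}" using redk_in H1[OF lt(1)] by auto
    then show "s \<in> sq K" using lt ain[OF lt(1,2)] bin[OF lt(1)] unfolding g_def sq_def by auto
  qed
  have key: "(\<Sum>z\<in>{z \<in> I. g x y z \<in> A}. w z) = (\<Sum>l<n. c l * real (card {t \<in> {1..kk l}. g x y (l, t) \<in> A}) / real (kk l))" for x y A
    unfolding I_def w_def by (rule sum_Sigma_filter)
  have wsum: "(\<Sum>z\<in>I. w z) = 1"
  proof -
    have "(\<Sum>z\<in>I. w z) = (\<Sum>z\<in>{z \<in> I. g False False z \<in> UNIV}. w z)" by simp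
    also have "\<dots> = (\<Sum>l<n. c l)" unfolding key
    proof (intro sum.cong refl)
      fix l assume "l \<in> {..<n}"
      then have "kk l \<ge> 1" using H1 by auto
      moreover have "{t \<in> {1..kk l}. g False False (l, t) \<in> UNIV} = {1..kk l}" by auto
      ultimately show "c l * real (card {t \<in> {1..kk l}. g False False (l, t) \<in> UNIV}) / real (kk l) = c l"
        by simp
    qed
    finally show ?thesis using csum by simp
  qed
  have \<nu>eq: "\<nu> l x y = ptm K {1..kk l} (\<lambda>_. 1 / real (kk l)) (\<lambda>t. g x y (l, t))" for l x y
    unfolding \<nu>_def prm_def g_def by simp
  have em: "emeasure (\<mu>s x y) A = ennreal (\<Sum>l<n. c l * real (card {t \<in> {1..kk l}. g x y (l, t) \<in> A}) / real (kk l))"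
    if A: "A \<in> sets (sqM K)" for x y A
    by (simp only: \<mu>s_def emeasure_ptm[OF finI wnn gin A] key)
  have beh: "is_behaviour K \<mu>s"
    unfolding is_behaviour_def \<mu>s_def using prob_space_ptm[OF finI wnn gin wsum] by simp
  have conv: "in_conv_PR K \<mu>s"
    unfolding in_conv_PR_def
  proof (rule conjI[OF beh], rule exI[of _ n], rule exI[of _ c], rule exI[of _ \<nu>], intro conjI)
    show "\<forall>i<n. 0 \<le> c i \<and> is_PR_box K (\<nu> i)" using H1 PR by auto
    show "(\<Sum>i<n. c i) = 1" by (rule csum)
    show "\<forall>x y. \<forall>A\<in>sets (\<mu>s x y). emeasure (\<mu>s x y) A = (\<Sum>i<n. ennreal (c i) * emeasure (\<nu> i x y) A)"
    proof (intro allI ballI)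
    fix x y A assume A: "A \<in> sets (\<mu>s x y)"
    then have A': "A \<in> sets (sqM K)" by (simp add: \<mu>s_def)
    have gl: "(\<lambda>t. g x y (l, t)) ` {1..kk l} \<subseteq> sq K" if "l < n" for l
      using gin[of x y] that unfolding I_def by auto
    have "emeasure (\<nu> l x y) A = ennreal (real (card {t \<in> {1..kk l}. g x y (l, t) \<in> A}) / real (kk l))" if l: "l < n" for l
      unfolding \<nu>eq by (subst emeasure_ptm[OF _ _ gl[OF l] A']) auto
    then have "(\<Sum>i<n. ennreal (c i) * emeasure (\<nu> i x y) A) =
        (\<Sum>l<n. ennreal (c l * real (card {t \<in> {1..kk l}. g x y (l, t) \<in> A}) / real (kk l)))"
      using H1 by (intro sum.cong refl) (auto simp: ennreal_mult'[symmetric] ennreal_mult[symmetric])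
    also have "\<dots> = ennreal (\<Sum>l<n. c l * real (card {t \<in> {1..kk l}. g x y (l, t) \<in> A}) / real (kk l))"
      using H1 by (subst sum_ennreal) auto
    finally show "emeasure (\<mu>s x y) A = (\<Sum>i<n. ennreal (c i) * emeasure (\<nu> i x y) A)"
      using em[OF A'] by simp
    qed
  qed
  have cellm: "measure (\<mu>s x y) (cellp K m i j) = p x y i j" if ij: "i < m" "j < m" for x y i j
  proof -
    have cardeq: "real (card {t \<in> {1..kk l}. g x y (l, t) \<in> cellp K m i j}) / real (kk l) = boxq (kk l) (\<alpha> l) (\<beta> l) x y i j"
      if l: "l < n" for l
    proof -
      have "{t \<in> {1..kk l}. g x y (l, t) \<in> cellp K m i j} =
            {t \<in> {1..kk l}. \<alpha> l x t = i \<and> \<beta> l y (redk (kk l) (t + of_bool (x \<and> y))) = j}"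
      proof (intro Collect_cong conj_cong refl)
        fix t assume t: "t \<in> {1..kk l}"
        have r: "redk (kk l) (t + of_bool (x \<and> y)) \<in> {1..kk l}" using redk_in H1[OF l] by auto
        show "(g x y (l, t) \<in> cellp K m i j) = (\<alpha> l x t = i \<and> \<beta> l y (redk (kk l) (t + of_bool (x \<and> y))) = j)"
          using ca[OF l t] cb[OF l r] ain[OF l t] bin[OF l r] unfolding g_def cellp_def sq_def by auto
      qed
      then show ?thesis unfolding boxq_def by (simp only: card_filter_sum[OF finite_atLeastAtMost])
    qed
    have "measure (\<mu>s x y) (cellp K m i j) = (\<Sum>l<n. c l * real (card {t \<in> {1..kk l}. g x y (l, t) \<in> cellp K m i j}) / real (kk l))"
    proof -
      have "0 \<le> (\<Sum>l<n. c l * real (card {t \<in> {1..kk l}. g x y (l, t) \<in> cellp K m i j}) / real (kk l))"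
        by (intro sum_nonneg) (use H1 in auto)
      then show ?thesis using em[OF cellp_sets] by (simp add: measure_def)
    qed
    also have "\<dots> = (\<Sum>l<n. c l * boxq (kk l) (\<alpha> l) (\<beta> l) x y i j)"
    proof (intro sum.cong refl)
      fix l assume "l \<in> {..<n}"
      then have l: "l < n" by simp
      have "c l * real (card {t \<in> {1..kk l}. g x y (l, t) \<in> cellp K m i j}) / real (kk l) =
            c l * (real (card {t \<in> {1..kk l}. g x y (l, t) \<in> cellp K m i j}) / real (kk l))" by simp
      also have "\<dots> = c l * boxq (kk l) (\<alpha> l) (\<beta> l) x y i j" by (simp only: cardeq[OF l])
      finally show "c l * real (card {t \<in> {1..kk l}. g x y (l, t) \<in> cellp K m i j}) / real (kk l) =
            c l * boxq (kk l) (\<alpha> l) (\<beta> l) x y i j" .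
    qed
    also have "\<dots> = p x y i j" using H2[OF ij] by simp
    finally show ?thesis .
  qed
  show ?thesis using conv cellm unfolding p_def by blast
qed

lemma compact_sq: "compact (sq K)"
  unfolding sq_def by (intro compact_Times compact_Icc)

lemma near_center:
  assumes K: "K > 0" and m: "m \<ge> 1" and s: "s \<in> sq K"
  shows "dist s (zc K m (cellix K m (fst s)) (cellix K m (snd s))) \<le> 4 * K / m"
    and "zc K m (cellix K m (fst s)) (cellix K m (snd s)) \<in> sq K"
proof -
  have w: "pt K m i 0 1 = -K + (2*K/m) * i" for i by (simp add: pt_def)
  have d1: "dist t (pt K m (cellix K m t) 0 1) \<le> 2*K/m" if t: "t \<in> {-K..K}" for t
  proof -
    have e: "-K + (2*K/m) * real (cellix K m t + 1) = -K + (2*K/m) * real (cellix K m t) + 2*K/m"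
      by (simp add: distrib_left)
    have "-K + (2*K/m) * real (cellix K m t) \<le> t" "t \<le> -K + (2*K/m) * real (cellix K m t) + 2*K/m"
      using cell_bound(1)[OF K m t] cell_bound(2)[OF K m t] e by linarith+
    then show ?thesis unfolding w dist_real_def by (simp add: abs_le_iff)
  qed
  obtain a b where ab: "s = (a, b)" by (cases s)
  have a: "a \<in> {-K..K}" and b: "b \<in> {-K..K}" using s ab by (auto simp: sq_def)
  have "dist s (zc K m (cellix K m (fst s)) (cellix K m (snd s))) =
        sqrt ((dist a (pt K m (cellix K m a) 0 1))\<^sup>2 + (dist b (pt K m (cellix K m b) 0 1))\<^sup>2)"
    unfolding ab zc_def by (simp add: dist_Pair_Pair)
  also have "\<dots> \<le> \<bar>dist a (pt K m (cellix K m a) 0 1)\<bar> + \<bar>dist b (pt K m (cellix K m b) 0 1)\<bar>"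
    by (rule sqrt_sum_squares_le_sum_abs)
  also have "\<dots> \<le> 2*K/m + 2*K/m" using d1[OF a] d1[OF b] by simp
  finally show "dist s (zc K m (cellix K m (fst s)) (cellix K m (snd s))) \<le> 4 * K / m" by simp
  show "zc K m (cellix K m (fst s)) (cellix K m (snd s)) \<in> sq K"
    unfolding zc_def sq_def using pt_in[OF K m cellix_lt[OF m, of K "fst s"], of 0 1] pt_in[OF K m cellix_lt[OF m, of K "snd s"], of 0 1] by auto
qed

lemma supset_dir:
  assumes K: "K > 0" and ns: "no_signaling K \<mu>"
  shows "\<exists>\<mu>s. (\<forall>n. in_conv_PR K (\<mu>s n)) \<and> cw_weak_conv K \<mu>s \<mu>"
proof -
  define Q where "Q n \<nu> \<longleftrightarrow> in_conv_PR K \<nu> \<and> (\<forall>x y i j. i < Suc n \<longrightarrow> j < Suc n \<longrightarrow>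
           measure (\<nu> x y) (cellp K (Suc n) i j) = measure (\<mu> x y) (cellp K (Suc n) i j))" for n \<nu>
  define \<mu>s where "\<mu>s n = (SOME \<nu>. Q n \<nu>)" for n
  have Q: "Q n (\<mu>s n)" for n
  proof -
    have "\<exists>\<nu>. Q n \<nu>" unfolding Q_def by (rule approx_m[OF K _ ns]) simp
    then show ?thesis unfolding \<mu>s_def by (rule someI_ex)
  qed
  have PM: "prob_space (\<mu> x y)" "sets (\<mu> x y) = sets (sqM K)" for x y
    using ns unfolding no_signaling_def is_behaviour_def by auto
  have PN: "prob_space (\<mu>s n x y)" "sets (\<mu>s n x y) = sets (sqM K)" for n x y
    using Q[of n] unfolding Q_def in_conv_PR_def is_behaviour_def by auto
  have wc: "cw_weak_conv K \<mu>s \<mu>"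
    unfolding cw_weak_conv_def
  proof (intro allI impI)
    fix x y and f :: "real \<times> real \<Rightarrow> real"
    assume fcb: "continuous_on (sq K) f \<and> bounded (f ` sq K)"
    then have fc: "continuous_on (sq K) f" and fb: "bounded (f ` sq K)" by auto
    have uc: "uniformly_continuous_on (sq K) f"
      by (rule compact_uniformly_continuous[OF fc compact_sq])
    show "(\<lambda>n. \<integral>t. f t \<partial>(\<mu>s n x y)) \<longlonglongrightarrow> (\<integral>t. f t \<partial>\<mu> x y)"
    proof (rule LIMSEQ_I)
      fix r :: real assume r: "r > 0"
      obtain d where d: "d > 0" "\<And>s s'. s \<in> sq K \<Longrightarrow> s' \<in> sq K \<Longrightarrow> dist s' s < d \<Longrightarrow> dist (f s') (f s) < r / 3"
      proof -
        have "r / 3 > 0" using r by simp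
        then have "\<exists>d>0. \<forall>s\<in>sq K. \<forall>s'\<in>sq K. dist s' s < d \<longrightarrow> dist (f s') (f s) < r / 3"
          using uc unfolding uniformly_continuous_on_def by blast
        then show ?thesis using that by blast
      qed
      obtain N :: nat where N: "4 * K / d < real N" using reals_Archimedean2 by blast
      show "\<exists>no. \<forall>n\<ge>no. norm ((\<integral>t. f t \<partial>(\<mu>s n x y)) - (\<integral>t. f t \<partial>\<mu> x y)) < r"
      proof (intro exI allI impI)
        fix n assume n: "N \<le> n"
        define m where "m = Suc n"
        have m1: "m \<ge> 1" by (simp add: m_def)
        have "4 * K / d < real m" using N n unfolding m_def by linarith
        then have md: "4 * K / m < d" using d(1) m1 by (simp add: field_simps)
        have eps: "\<bar>f s - f (zc K m (cellix K m (fst s)) (cellix K m (snd s)))\<bar> \<le> r / 3" if s: "s \<in> sq K" for s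
        proof -
          have "dist s (zc K m (cellix K m (fst s)) (cellix K m (snd s))) < d"
            using near_center(1)[OF K m1 s] md by linarith
          then have "dist (f s) (f (zc K m (cellix K m (fst s)) (cellix K m (snd s)))) < r / 3"
            using d(2)[OF near_center(2)[OF K m1 s] s] by (simp add: dist_commute)
          then show ?thesis by (simp add: dist_real_def)
        qed
        have A1: "\<bar>(\<integral>s. f s \<partial>\<mu> x y) - (\<Sum>i<m. \<Sum>j<m. f (zc K m i j) * measure (\<mu> x y) (cellp K m i j))\<bar> \<le> r / 3"
          by (rule cell_approx[OF K m1 PM(1)[of x y] PM(2)[of x y] fc fb, OF eps])
        have A2: "\<bar>(\<integral>s. f s \<partial>\<mu>s n x y) - (\<Sum>i<m. \<Sum>j<m. f (zc K m i j) * measure (\<mu>s n x y) (cellp K m i j))\<bar> \<le> r / 3"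
          by (rule cell_approx[OF K m1 PN(1)[of n x y] PN(2)[of n x y] fc fb, OF eps])
        have sq: "(\<Sum>i<m. \<Sum>j<m. f (zc K m i j) * measure (\<mu>s n x y) (cellp K m i j)) =
              (\<Sum>i<m. \<Sum>j<m. f (zc K m i j) * measure (\<mu> x y) (cellp K m i j))"
          using Q[of n] unfolding Q_def m_def by (intro sum.cong refl) auto
        have B1: "(\<integral>s. f s \<partial>\<mu> x y) - (\<Sum>i<m. \<Sum>j<m. f (zc K m i j) * measure (\<mu> x y) (cellp K m i j)) \<le> r / 3"
             "-(r/3) \<le> (\<integral>s. f s \<partial>\<mu> x y) - (\<Sum>i<m. \<Sum>j<m. f (zc K m i j) * measure (\<mu> x y) (cellp K m i j))"
          using A1 unfolding abs_le_iff by linarith+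
        have B2: "(\<integral>s. f s \<partial>\<mu>s n x y) - (\<Sum>i<m. \<Sum>j<m. f (zc K m i j) * measure (\<mu> x y) (cellp K m i j)) \<le> r / 3"
             "-(r/3) \<le> (\<integral>s. f s \<partial>\<mu>s n x y) - (\<Sum>i<m. \<Sum>j<m. f (zc K m i j) * measure (\<mu> x y) (cellp K m i j))"
          using A2 unfolding abs_le_iff sq by linarith+
        have "\<bar>(\<integral>t. f t \<partial>(\<mu>s n x y)) - (\<integral>t. f t \<partial>\<mu> x y)\<bar> < r"
          unfolding abs_less_iff using B1 B2 r by linarith
        then show "norm ((\<integral>t. f t \<partial>(\<mu>s n x y)) - (\<integral>t. f t \<partial>\<mu> x y)) < r"
          by simp
      qed
    qed
  qed
  have "\<forall>n. in_conv_PR K (\<mu>s n)" using Q unfolding Q_def by blast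
  then show ?thesis using wc by blast
qed

theorem lemma1:
  fixes K :: real
  assumes "K > 0"
  shows "{\<mu>. is_behaviour K \<mu> \<and>
             (\<exists>\<mu>s. (\<forall>n. in_conv_PR K (\<mu>s n)) \<and> cw_weak_conv K \<mu>s \<mu>)}
         = {\<mu>. no_signaling K \<mu>}"
proof (intro equalityI subsetI)
  fix \<mu> assume "\<mu> \<in> {\<mu>. is_behaviour K \<mu> \<and> (\<exists>\<mu>s. (\<forall>n. in_conv_PR K (\<mu>s n)) \<and> cw_weak_conv K \<mu>s \<mu>)}"
  then obtain \<mu>s where "is_behaviour K \<mu>" "\<And>n. in_conv_PR K (\<mu>s n)" "cw_weak_conv K \<mu>s \<mu>" by blast
  then show "\<mu> \<in> {\<mu>. no_signaling K \<mu>}" using subset_dir by blast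
next
  fix \<mu> assume "\<mu> \<in> {\<mu>. no_signaling K \<mu>}"
  then have ns: "no_signaling K \<mu>" by simp
  then have "is_behaviour K \<mu>" unfolding no_signaling_def by simp
  then show "\<mu> \<in> {\<mu>. is_behaviour K \<mu> \<and> (\<exists>\<mu>s. (\<forall>n. in_conv_PR K (\<mu>s n)) \<and> cw_weak_conv K \<mu>s \<mu>)}"
    using supset_dir[OF assms ns] by blast
qed

end
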